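(* Let $K$ be a $\mathbb{Z}$-field, let $n,m\ge1$, $r,k\ge 0$, and let $C_1,C_2\subseteq \Lambda_{n,m}^r\times K^{k+1}$ be cells. Then $C_1\cap C_2$ can be partitioned as a finite union of cells in $\Lambda_{n,m}^r\times K^{k+1}$.
   Context: A $\mathbb{Z}$-field is a valued field $K$ (valuation $\mathrm{ord}: K^\times\to\Gamma_K$, $\mathrm{ord}\,0=\infty$, valuation ring $R_K$) containing an element $\pi$ of minimal positive valuation, normalized so that $\mathrm{ord}\,\pi=1$, such that $\Gamma_K$ is a $\mathbb{Z}$-group (elementarily equivalent to $\mathbb{Z}$ with least positive element $1$), equipped with a compatible system of angular component maps $\mathrm{ac}_{\pi^m}:K\to R_K/\pi^mR_K$ ($m\ge1$), multiplicative on $K^\times$ with values in $(R_K/\pi^mR_K)^\times$, $\mathrm{ac}_{\pi^m}(\pi)=1$, $\mathrm{ac}_{\pi^m}(u)=u\bmod\pi^m$ for units $u$, $\mathrm{ac}_{\pi^m}(0)=0$. No assumption on residue field, characteristic, or Henselianity. For $x\in K^\times$, $\gamma_n(x)\in\{0,\dots,n-1\}$ is the remainder of $\mathrm{ord}\,x$ mod $n$. $\Lambda_{n,m}$ is the quotient of $K$ by: $x\sim y$ iff $x=y=0$, or $x,y\ne0$, $\gamma_n(x)=\gamma_n(y)$ and $\mathrm{ac}_{\pi^m}(x)=\mathrm{ac}_{\pi^m}(y)$; $\rho_{n,m}:K\to\Lambda_{n,m}$ is the quotient map; for $\lambda=\rho_{n,m}(x)\neq 0$ write $\mathrm{ord}\,\lambda\equiv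 \mathrm{ord}\,x \bmod n$. $\mathbb{P}_K$ denotes the prime field of $K$. The language $\widehat{\mathcal{L}}$: main sort $K$ with $+$, scalar multiplications $\bar c: x\mapsto cx$ for $c\in\mathbb{P}_K(\pi)$, and $x\mid y\iff \mathrm{ord}\,x\le\mathrm{ord}\,y$; sorts $\Lambda_{n,m}$ ($n,m\ge1$); maps $\rho_{n,m}:K\to\Lambda_{n,m}$ and natural projections $\Lambda_{kn,m'}\to\Lambda_{n,m}$ ($k\ge1$, $m'\ge m$); on each $\Lambda_{n,m}$ the unary relations $\equiv_{n,k}(\lambda)\iff\lambda\ne0\wedge\mathrm{ord}\,\lambda\equiv k\bmod n$, and binary functions $+_r,-_r$ ($r\in\mathbb{N}$) defined as follows. For $r\ge1$ and $\lambda,\lambda'\ne0$: $\lambda\pm_r\lambda'=\rho_{n,m}(x\pm\pi^{rn}y)$ for any $x,y$ with $\rho_{n,m}(x)=\lambda$, $\rho_{n,m}(y)=\lambda'$, $0\le\mathrm{ord}\,x<n$, $0\le\mathrm{ord}\,y<n$; and $0\pm_r\lambda$, $\lambda\pm_r0$ are $\pm\lambda$, $\lambda$ respectively (with $+_r$: $0+_r\lambda=\lambda+_r0=\lambda$). For $r=0$: the same formula is used on the domain $D_\pm$ of pairs $(\lambda,\lambda')$ such that for all $x,y$ with $\rho_{n,m}(x)=\lambda,\rho_{n,m}(y)=\lambda'$ and $\mathrm{ord}\,x=\mathrm{ord}\,y$ one has $\mathrm{ord}(x\pm y)=\mathrm{ord}\,x$; outside $D_\pm$ the value is $0$. Parameters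 from $K$ are allowed. A formula/set is "definable without $K$-quantifiers" if it is defined by an $\widehat{\mathcal{L}}$-formula with no quantifiers over the sort $K$ (quantifiers over the sorts $\Lambda_{n,m}$ are allowed). A $(\mathbb{P}_K(\pi),K)$-linear polynomial in $x=(x_1,\dots,x_k)$ is $a_1x_1+\dots+a_kx_k+b$ with $a_i\in\mathbb{P}_K(\pi)$, $b\in K$. For $D\subseteq\Lambda_{n,m}^{r+1}\times K^k$ and $(\lambda,x)\in\Lambda_{n,m}^r\times K^k$, $D(\lambda,x)=\{\mu\in\Lambda_{n,m}\mid(\lambda,\mu,x)\in D\}$. A cell in $\Lambda_{n,m}^r\times K^{k+1}$ is a set $$\{(\lambda,x,t)\in D_{n,m}\times D_K\times K\mid \mathrm{ord}\,a_1(x)\ \square_1\ \mathrm{ord}(t-c(x))\ \square_2\ \mathrm{ord}\,a_2(x),\ \rho_{n,m}(t-c(x))\in D(\lambda,x)\}$$ where $D_{n,m}\subseteq\Lambda_{n,m}^r$, $D_K\subseteq K^k$ and $D\subseteq\Lambda_{n,m}^{r+1}\times K^k$ are definable without $K$-quantifiers, $a_1,a_2,c$ are $(\mathbb{P}_K(\pi),K)$-linear polynomials ($c$ is called a center of the cell), and each $\square_i$ is either $<$ or "no condition". *)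

theory Defs
  imports Main
begin

text \<open>A (candidate) Z-field structure on a field of type 'a with value group 'g:
  the valuation zord (only meaningful on nonzero elements; ord 0 = infinity is
  handled explicitly everywhere), the uniformizer zpi, and the angular component
  maps zac m, where zac m x is a representative in R_K of the class
  ac_{pi^m}(x) in R_K / pi^m R_K.\<close>

record ('a, 'g) zfield =
  zord :: "'a \<Rightarrow> 'g"
  zpi  :: 'a
  zac  :: "nat \<Rightarrow> 'a \<Rightarrow> 'a"

primrec nsm :: "nat \<Rightarrow> 'g::ab_group_add \<Rightarrow> 'g" where
  "nsm 0 g = 0"
| "nsm (Suc n) g = g + nsm n g"

definition unit_g :: "('a, 'g) zfield \<Rightarrow> 'g" where
  "unit_g F = zord F (zpi F)"

definition Rset :: "('a::field, 'g::linordered_ab_group_add) zfield \<Rightarrow> 'a set" where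
  "Rset F = {x. x = 0 \<or> 0 \<le> zord F x}"

definition congpi :: "('a::field, 'g::linordered_ab_group_add) zfield \<Rightarrow> nat \<Rightarrow> 'a \<Rightarrow> 'a \<Rightarrow> bool" where
  "congpi F m a b = (\<exists>c\<in>Rset F. a - b = zpi F ^ m * c)"

definition is_zfield :: "('a::field, 'g::linordered_ab_group_add) zfield \<Rightarrow> bool" where
  "is_zfield F \<longleftrightarrow>
    \<comment> \<open>valuation\<close>
    (\<forall>x y. x \<noteq> 0 \<longrightarrow> y \<noteq> 0 \<longrightarrow> zord F (x * y) = zord F x + zord F y) \<and>
    (\<forall>x y. x \<noteq> 0 \<longrightarrow> y \<noteq> 0 \<longrightarrow> x + y \<noteq> 0 \<longrightarrow> min (zord F x) (zord F y) \<le> zord F (x + y)) \<and>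
    \<comment> \<open>'g is the value group Gamma_K\<close>
    (\<forall>g. \<exists>x. x \<noteq> 0 \<and> zord F x = g) \<and>
    \<comment> \<open>pi has minimal positive valuation, which is the least positive element 1\<close>
    zpi F \<noteq> 0 \<and> 0 < unit_g F \<and> (\<forall>g. 0 < g \<longrightarrow> unit_g F \<le> g) \<and>
    \<comment> \<open>Gamma_K is a Z-group (Presburger axioms: ordered abelian group, least
        positive element 1, division with remainder by every n \<ge> 1)\<close>
    (\<forall>n\<ge>1. \<forall>g. \<exists>r<n. \<exists>h. g = nsm r (unit_g F) + nsm n h) \<and>
    \<comment> \<open>angular component maps\<close>
    (\<forall>m\<ge>1.
       (\<forall>x. zac F m x \<in> Rset F) \<and>
       (\<forall>x. x \<noteq> 0 \<longrightarrow> (\<exists>u\<in>Rset F. congpi F m (zac F m x * u) 1)) \<and>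
       (\<forall>x y. x \<noteq> 0 \<longrightarrow> y \<noteq> 0 \<longrightarrow> congpi F m (zac F m (x * y)) (zac F m x * zac F m y)) \<and>
       congpi F m (zac F m (zpi F)) 1 \<and>
       (\<forall>u. u \<noteq> 0 \<longrightarrow> zord F u = 0 \<longrightarrow> congpi F m (zac F m u) u) \<and>
       congpi F m (zac F m 0) 0 \<and>
       (\<forall>m'\<ge>m. \<forall>x. congpi F m (zac F m' x) (zac F m x)))"

definition gamma :: "('a::field, 'g::linordered_ab_group_add) zfield \<Rightarrow> nat \<Rightarrow> 'a \<Rightarrow> nat" where
  "gamma F n x = (THE r. r < n \<and> (\<exists>h. zord F x = nsm r (unit_g F) + nsm n h))"

text \<open>ord x < ord y, with ord 0 = infinity\<close>
definition vlt :: "('a::field, 'g::linordered_ab_group_add) zfield \<Rightarrow> 'a \<Rightarrow> 'a \<Rightarrow> bool" where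
  "vlt F x y \<longleftrightarrow> x \<noteq> 0 \<and> (y = 0 \<or> zord F x < zord F y)"

text \<open>x | y iff ord x \<le> ord y, with ord 0 = infinity\<close>
definition vdiv :: "('a::field, 'g::linordered_ab_group_add) zfield \<Rightarrow> 'a \<Rightarrow> 'a \<Rightarrow> bool" where
  "vdiv F x y \<longleftrightarrow> y = 0 \<or> (x \<noteq> 0 \<and> zord F x \<le> zord F y)"

text \<open>The prime field of K adjoined pi: the smallest subfield containing pi.\<close>
definition Ppi :: "('a::field, 'g) zfield \<Rightarrow> 'a set" where
  "Ppi F = \<Inter>{S. zpi F \<in> S \<and> 1 \<in> S \<and>
      (\<forall>x\<in>S. \<forall>y\<in>S. x + y \<in> S \<and> x - y \<in> S \<and> x * y \<in> S) \<and> (\<forall>x\<in>S. inverse x \<in> S)}"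

text \<open>Elements of Lambda_{n,m} are represented by their equivalence classes (subsets of K).\<close>

definition lsim :: "('a::field, 'g::linordered_ab_group_add) zfield \<Rightarrow> nat \<Rightarrow> nat \<Rightarrow> 'a \<Rightarrow> 'a \<Rightarrow> bool" where
  "lsim F n m x y \<longleftrightarrow> (x = 0 \<and> y = 0) \<or>
     (x \<noteq> 0 \<and> y \<noteq> 0 \<and> gamma F n x = gamma F n y \<and> congpi F m (zac F m x) (zac F m y))"

definition rho :: "('a::field, 'g::linordered_ab_group_add) zfield \<Rightarrow> nat \<Rightarrow> nat \<Rightarrow> 'a \<Rightarrow> 'a set" where
  "rho F n m x = {y. lsim F n m x y}"

definition Lam :: "('a::field, 'g::linordered_ab_group_add) zfield \<Rightarrow> nat \<Rightarrow> nat \<Rightarrow> 'a set set" where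
  "Lam F n m = range (rho F n m)"

text \<open>the zero element of every Lambda_{n,m} is the class {0}\<close>
definition pick :: "'a set \<Rightarrow> 'a" where
  "pick A = (SOME x. x \<in> A)"

definition rep :: "('a::field, 'g::linordered_ab_group_add) zfield \<Rightarrow> nat \<Rightarrow> 'a set \<Rightarrow> 'a" where
  "rep F n A = (SOME x. x \<in> A \<and> 0 \<le> zord F x \<and> zord F x < nsm n (unit_g F))"

text \<open>domain D_{op} of the partial operation for r = 0 (op is + or -)\<close>
definition inD :: "('a::field, 'g::linordered_ab_group_add) zfield \<Rightarrow> nat \<Rightarrow> nat \<Rightarrow>
    ('a \<Rightarrow> 'a \<Rightarrow> 'a) \<Rightarrow> 'a set \<Rightarrow> 'a set \<Rightarrow> bool" where
  "inD F n m op A B \<longleftrightarrow> (\<forall>x y. rho F n m x = A \<longrightarrow> rho F n m y = B \<longrightarrow> x \<noteq> 0 \<longrightarrow> y \<noteq> 0 \<longrightarrow>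
      zord F x = zord F y \<longrightarrow> (op x y \<noteq> 0 \<and> zord F (op x y) = zord F x))"

definition ladd :: "('a::field, 'g::linordered_ab_group_add) zfield \<Rightarrow> nat \<Rightarrow> nat \<Rightarrow> nat \<Rightarrow>
    'a set \<Rightarrow> 'a set \<Rightarrow> 'a set" where
  "ladd F n m r A B =
     (if A = {0} then B else if B = {0} then A
      else if r = 0 \<and> \<not> inD F n m (+) A B then {0}
      else rho F n m (rep F n A + zpi F ^ (r * n) * rep F n B))"

definition lsub :: "('a::field, 'g::linordered_ab_group_add) zfield \<Rightarrow> nat \<Rightarrow> nat \<Rightarrow> nat \<Rightarrow>
    'a set \<Rightarrow> 'a set \<Rightarrow> 'a set" where
  "lsub F n m r A B =
     (if A = {0} then rho F n m (- pick B) else if B = {0} then A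
      else if r = 0 \<and> \<not> inD F n m (-) A B then {0}
      else rho F n m (rep F n A - zpi F ^ (r * n) * rep F n B))"

datatype 'a kterm = KVar nat | KConst 'a | KAdd "'a kterm" "'a kterm" | KScal 'a "'a kterm"

text \<open>Lambda-variables carry their sort: LVar i n m is variable i of sort Lambda_{n,m}.
  LProj n m u is the projection of u into Lambda_{n,m}; LAdd n m r u v is u +_r v in Lambda_{n,m}.\<close>
datatype 'a lterm = LVar nat nat nat | LRho nat nat "'a kterm" | LProj nat nat "'a lterm"
  | LAdd nat nat nat "'a lterm" "'a lterm" | LSub nat nat nat "'a lterm" "'a lterm"

datatype 'a fm = FEqK "'a kterm" "'a kterm" | FDivK "'a kterm" "'a kterm"
  | FEqL "'a lterm" "'a lterm"
  | FCong nat nat nat "'a lterm" \<comment> \<open>FCong n m k u: the relation \<equiv>_{n,k} on sort Lambda_{n,m}\<close>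
  | FNot "'a fm" | FAnd "'a fm" "'a fm"
  | FExL nat nat nat "'a fm" \<comment> \<open>quantifier over variable (i,n,m) of sort Lambda_{n,m}\<close>

fun kwf :: "'a set \<Rightarrow> 'a kterm \<Rightarrow> bool" where
  "kwf P (KVar i) = True"
| "kwf P (KConst c) = True"
| "kwf P (KAdd s t) = (kwf P s \<and> kwf P t)"
| "kwf P (KScal c t) = (c \<in> P \<and> kwf P t)"

fun lsort :: "'a set \<Rightarrow> 'a lterm \<Rightarrow> (nat \<times> nat) option" where
  "lsort P (LVar i n m) = (if 1 \<le> n \<and> 1 \<le> m then Some (n, m) else None)"
| "lsort P (LRho n m t) = (if 1 \<le> n \<and> 1 \<le> m \<and> kwf P t then Some (n, m) else None)"
| "lsort P (LProj n m u) = (case lsort P u of None \<Rightarrow> None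
     | Some (n', m') \<Rightarrow> if 1 \<le> n \<and> 1 \<le> m \<and> n dvd n' \<and> m \<le> m' then Some (n, m) else None)"
| "lsort P (LAdd n m r u v) =
     (if lsort P u = Some (n, m) \<and> lsort P v = Some (n, m) then Some (n, m) else None)"
| "lsort P (LSub n m r u v) =
     (if lsort P u = Some (n, m) \<and> lsort P v = Some (n, m) then Some (n, m) else None)"

fun fwf :: "'a set \<Rightarrow> 'a fm \<Rightarrow> bool" where
  "fwf P (FEqK s t) = (kwf P s \<and> kwf P t)"
| "fwf P (FDivK s t) = (kwf P s \<and> kwf P t)"
| "fwf P (FEqL u v) = (lsort P u \<noteq> None \<and> lsort P u = lsort P v)"
| "fwf P (FCong n m k u) = (lsort P u = Some (n, m))"
| "fwf P (FNot \<phi>) = fwf P \<phi>"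
| "fwf P (FAnd \<phi> \<psi>) = (fwf P \<phi> \<and> fwf P \<psi>)"
| "fwf P (FExL i n m \<phi>) = (1 \<le> n \<and> 1 \<le> m \<and> fwf P \<phi>)"

fun keval :: "(nat \<Rightarrow> 'a::field) \<Rightarrow> 'a kterm \<Rightarrow> 'a" where
  "keval e (KVar i) = e i"
| "keval e (KConst c) = c"
| "keval e (KAdd s t) = keval e s + keval e t"
| "keval e (KScal c t) = c * keval e t"

fun leval :: "('a::field, 'g::linordered_ab_group_add) zfield \<Rightarrow> (nat \<times> nat \<times> nat \<Rightarrow> 'a set) \<Rightarrow>
    (nat \<Rightarrow> 'a) \<Rightarrow> 'a lterm \<Rightarrow> 'a set" where
  "leval F eL eK (LVar i n m) = eL (i, n, m)"
| "leval F eL eK (LRho n m t) = rho F n m (keval eK t)"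
| "leval F eL eK (LProj n m u) = rho F n m (pick (leval F eL eK u))"
| "leval F eL eK (LAdd n m r u v) = ladd F n m r (leval F eL eK u) (leval F eL eK v)"
| "leval F eL eK (LSub n m r u v) = lsub F n m r (leval F eL eK u) (leval F eL eK v)"

fun sat :: "('a::field, 'g::linordered_ab_group_add) zfield \<Rightarrow> (nat \<times> nat \<times> nat \<Rightarrow> 'a set) \<Rightarrow>
    (nat \<Rightarrow> 'a) \<Rightarrow> 'a fm \<Rightarrow> bool" where
  "sat F eL eK (FEqK s t) = (keval eK s = keval eK t)"
| "sat F eL eK (FDivK s t) = vdiv F (keval eK s) (keval eK t)"
| "sat F eL eK (FEqL u v) = (leval F eL eK u = leval F eL eK v)"
| "sat F eL eK (FCong n m k u) =
     (let A = leval F eL eK u in A \<noteq> {0} \<and> gamma F n (pick A) = k mod n)"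
| "sat F eL eK (FNot \<phi>) = (\<not> sat F eL eK \<phi>)"
| "sat F eL eK (FAnd \<phi> \<psi>) = (sat F eL eK \<phi> \<and> sat F eL eK \<psi>)"
| "sat F eL eK (FExL i n m \<phi>) = (\<exists>A\<in>Lam F n m. sat F (eL((i, n, m) := A)) eK \<phi>)"

text \<open>Assignment of a tuple in Lambda_{n,m}^r x K^k to the free variables
  (i,n,m), i < r, and i < k; all remaining free variables get the value 0.\<close>
definition envL :: "nat \<Rightarrow> nat \<Rightarrow> 'a::zero set list \<Rightarrow> nat \<times> nat \<times> nat \<Rightarrow> 'a set" where
  "envL n m ls v = (case v of (i, n', m') \<Rightarrow>
      if i < length ls \<and> n' = n \<and> m' = m then ls ! i else {0})"

definition envK :: "'a::zero list \<Rightarrow> nat \<Rightarrow> 'a" where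
  "envK xs i = (if i < length xs then xs ! i else 0)"

text \<open>Subsets of Lambda_{n,m}^r x K^k definable without K-quantifiers (parameters from K allowed).\<close>
definition definable :: "('a::field, 'g::linordered_ab_group_add) zfield \<Rightarrow> nat \<Rightarrow> nat \<Rightarrow> nat \<Rightarrow> nat \<Rightarrow>
    ('a set list \<times> 'a list) set \<Rightarrow> bool" where
  "definable F n m r k S \<longleftrightarrow> (\<exists>\<phi>. fwf (Ppi F) \<phi> \<and>
     S = {(ls, xs). length ls = r \<and> length xs = k \<and> set ls \<subseteq> Lam F n m \<and>
                     sat F (envL n m ls) (envK xs) \<phi>})"

text \<open>(P_K(pi),K)-linear polynomial in k variables: coefficient list in P_K(pi) and constant b.\<close>
definition linpoly :: "('a::field, 'g) zfield \<Rightarrow> nat \<Rightarrow> 'a list \<times> 'a \<Rightarrow> bool" where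
  "linpoly F k p \<longleftrightarrow> length (fst p) = k \<and> set (fst p) \<subseteq> Ppi F"

definition peval :: "'a::field list \<times> 'a \<Rightarrow> 'a list \<Rightarrow> 'a" where
  "peval p xs = sum_list (map2 (*) (fst p) xs) + snd p"

text \<open>box b: b = True means the condition "<", b = False means "no condition"\<close>
definition box :: "('a::field, 'g::linordered_ab_group_add) zfield \<Rightarrow> bool \<Rightarrow> 'a \<Rightarrow> 'a \<Rightarrow> bool" where
  "box F b x y \<longleftrightarrow> (b \<longrightarrow> vlt F x y)"

definition is_cell :: "('a::field, 'g::linordered_ab_group_add) zfield \<Rightarrow> nat \<Rightarrow> nat \<Rightarrow> nat \<Rightarrow> nat \<Rightarrow>
    ('a set list \<times> 'a list \<times> 'a) set \<Rightarrow> bool" where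
  "is_cell F n m r k C \<longleftrightarrow>
    (\<exists>Dnm DK D a1 a2 c b1 b2.
       definable F n m r 0 Dnm \<and> definable F n m 0 k DK \<and> definable F n m (Suc r) k D \<and>
       linpoly F k a1 \<and> linpoly F k a2 \<and> linpoly F k c \<and>
       C = {(ls, xs, t). (ls, []) \<in> Dnm \<and> ([], xs) \<in> DK \<and>
              box F b1 (peval a1 xs) (t - peval c xs) \<and>
              box F b2 (t - peval c xs) (peval a2 xs) \<and>
              (ls @ [rho F n m (t - peval c xs)], xs) \<in> D})"

end

theory Submission
  imports Defs
begin

lemma nsm_add: "nsm (a+b) g = nsm a g + nsm b (g::'g::ab_group_add)"
  by (induction a) (auto simp: algebra_simps)
lemma nsm_mult: "nsm (a*b) g = nsm a (nsm b (g::'g::ab_group_add))"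
  by (induction a) (auto simp: nsm_add algebra_simps)
lemma nsm_distrib: "nsm a (g+h) = nsm a g + nsm a (h::'g::ab_group_add)"
  by (induction a) (auto simp: algebra_simps)
lemma nsm_zero[simp]: "nsm a (0::'g::ab_group_add) = 0"
  by (induction a) auto
lemma nsm_minus: "nsm a (-g) = - nsm a (g::'g::ab_group_add)"
  by (induction a) (auto simp: algebra_simps)
lemma nsm_diff: "nsm a (g-h) = nsm a g - nsm a (h::'g::ab_group_add)"
  using nsm_distrib[of a g "-h"] nsm_minus[of a h] by (simp del: nsm.simps)
lemma nsm_1[simp]: "nsm 1 g = g" by simp
lemma nsm_nonneg: "0 \<le> g \<Longrightarrow> 0 \<le> nsm a (g::'g::linordered_ab_group_add)"
  by (induction a) auto
lemma nsm_pos: "0 < g \<Longrightarrow> 0 < a \<Longrightarrow> 0 < nsm a (g::'g::linordered_ab_group_add)"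
  by (induction a) (auto simp: add_pos_nonneg nsm_nonneg)
lemma nsm_neg: "g < 0 \<Longrightarrow> 0 < a \<Longrightarrow> nsm a g < (0::'g::linordered_ab_group_add)"
  using nsm_pos[of "-g" a] by (simp add: nsm_minus)
lemma nsm_mono: "g \<le> h \<Longrightarrow> nsm a g \<le> nsm a (h::'g::linordered_ab_group_add)"
  using nsm_nonneg[of "h-g" a] by (simp add: nsm_diff)
lemma nsm_strict_mono: "g < h \<Longrightarrow> 0 < a \<Longrightarrow> nsm a g < nsm a (h::'g::linordered_ab_group_add)"
  using nsm_pos[of "h-g" a] by (simp add: nsm_diff)
lemma nsm_mono_n: "a \<le> b \<Longrightarrow> 0 \<le> g \<Longrightarrow> nsm a g \<le> nsm b (g::'g::linordered_ab_group_add)"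
  using nsm_add[of a "b-a" g] nsm_nonneg[of g "b-a"] by simp
lemma nsm_strict_mono_n: "a < b \<Longrightarrow> 0 < g \<Longrightarrow> nsm a g < nsm b (g::'g::linordered_ab_group_add)"
  using nsm_add[of a "b-a" g] nsm_pos[of g "b-a"] by simp
lemma nsm_inj_n: "nsm a g = nsm b g \<Longrightarrow> 0 < g \<Longrightarrow> a = (b::nat)" for g::"'g::linordered_ab_group_add"
  by (metis less_irrefl nat_neq_iff nsm_strict_mono_n)

locale zfl =
  fixes F :: "('a::field, 'g::linordered_ab_group_add) zfield" and n m :: nat
  assumes zf: "is_zfield F" and n1: "1 \<le> n" and m1: "1 \<le> m"
begin

abbreviation "ord \<equiv> zord F"
abbreviation "pi \<equiv> zpi F"
abbreviation "one \<equiv> unit_g F"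
abbreviation "R \<equiv> Rset F"
abbreviation "cg \<equiv> congpi F m"
abbreviation "ac \<equiv> zac F m"

lemmas zfs = zf[unfolded is_zfield_def]
lemma ord_mult: "x \<noteq> 0 \<Longrightarrow> y \<noteq> 0 \<Longrightarrow> ord (x*y) = ord x + ord y"
  using zfs[THEN conjunct1] by blast
lemma ord_ultra: "x \<noteq> 0 \<Longrightarrow> y \<noteq> 0 \<Longrightarrow> x+y \<noteq> 0 \<Longrightarrow> min (ord x) (ord y) \<le> ord (x+y)"
  using zfs[THEN conjunct2, THEN conjunct1] by blast
lemma ord_surj: "\<exists>x. x \<noteq> 0 \<and> ord x = g"
  using zfs[THEN conjunct2, THEN conjunct2, THEN conjunct1] by blast
lemma pi_nz[simp]: "pi \<noteq> 0"
  using zfs[THEN conjunct2, THEN conjunct2, THEN conjunct2, THEN conjunct1] by blast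
lemma one_pos: "0 < one"
  using zfs[THEN conjunct2, THEN conjunct2, THEN conjunct2, THEN conjunct2, THEN conjunct1] by blast
lemma one_least: "0 < g \<Longrightarrow> one \<le> g"
  using zfs[THEN conjunct2, THEN conjunct2, THEN conjunct2, THEN conjunct2, THEN conjunct2, THEN conjunct1] by blast
lemma zgroup: "1 \<le> k \<Longrightarrow> \<exists>r<k. \<exists>h. g = nsm r one + nsm k h"
  using zfs[THEN conjunct2, THEN conjunct2, THEN conjunct2, THEN conjunct2, THEN conjunct2, THEN conjunct2, THEN conjunct1] by blast
lemma ac_ax0: "\<forall>m\<ge>1.
       (\<forall>x. zac F m x \<in> Rset F) \<and>
       (\<forall>x. x \<noteq> 0 \<longrightarrow> (\<exists>u\<in>Rset F. congpi F m (zac F m x * u) 1)) \<and>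
       (\<forall>x y. x \<noteq> 0 \<longrightarrow> y \<noteq> 0 \<longrightarrow> congpi F m (zac F m (x * y)) (zac F m x * zac F m y)) \<and>
       congpi F m (zac F m (zpi F)) 1 \<and>
       (\<forall>u. u \<noteq> 0 \<longrightarrow> zord F u = 0 \<longrightarrow> congpi F m (zac F m u) u) \<and>
       congpi F m (zac F m 0) 0 \<and>
       (\<forall>m'\<ge>m. \<forall>x. congpi F m (zac F m' x) (zac F m x))"
  using zfs[THEN conjunct2, THEN conjunct2, THEN conjunct2, THEN conjunct2, THEN conjunct2, THEN conjunct2, THEN conjunct2] .
lemma ac_ax:
  "(\<forall>x. ac x \<in> R) \<and>
       (\<forall>x. x \<noteq> 0 \<longrightarrow> (\<exists>u\<in>R. cg (ac x * u) 1)) \<and>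
       (\<forall>x y. x \<noteq> 0 \<longrightarrow> y \<noteq> 0 \<longrightarrow> cg (ac (x * y)) (ac x * ac y)) \<and>
       cg (ac pi) 1 \<and>
       (\<forall>u. u \<noteq> 0 \<longrightarrow> ord u = 0 \<longrightarrow> cg (ac u) u) \<and>
       cg (ac 0) 0"
  using spec[OF ac_ax0, of m] m1 by simp
lemma ac_R: "ac x \<in> R" using ac_ax by blast
lemma ac_inv: "x \<noteq> 0 \<Longrightarrow> \<exists>u\<in>R. cg (ac x * u) 1" using ac_ax by blast
lemma ac_mult: "x \<noteq> 0 \<Longrightarrow> y \<noteq> 0 \<Longrightarrow> cg (ac (x*y)) (ac x * ac y)" using ac_ax by blast
lemma ac_pi: "cg (ac pi) 1" using ac_ax by blast
lemma ac_unit: "u \<noteq> 0 \<Longrightarrow> ord u = 0 \<Longrightarrow> cg (ac u) u" using ac_ax by blast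

lemma ord_one[simp]: "ord 1 = 0"
  using ord_mult[of 1 1] by simp
lemma ord_inverse: "x \<noteq> 0 \<Longrightarrow> ord (inverse x) = - ord x"
  using ord_mult[of x "inverse x"] by (simp add: eq_neg_iff_add_eq_0 add.commute)
lemma ord_divide: "x \<noteq> 0 \<Longrightarrow> y \<noteq> 0 \<Longrightarrow> ord (x / y) = ord x - ord y"
  by (simp add: divide_inverse ord_mult ord_inverse)
lemma ord_m1[simp]: "ord (-1) = 0"
proof -
  have "ord (-1) + ord (-1) = 0" using ord_mult[of "-1" "-1"] by simp
  then show ?thesis
    by (metis add_neg_neg add_pos_pos less_irrefl neq_iff)
qed
lemma ord_uminus[simp]: "ord (-x) = ord x"
proof (cases "x = 0")
  case False
  have "-x = (-1) * x" by simp
  then show ?thesis using ord_mult[of "-1" x] False by simp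
qed simp
lemma ord_pow: "ord (x ^ k) = nsm k (ord x)" if "x \<noteq> 0"
  using that by (induction k) (auto simp: ord_mult)
lemma ord_pi: "ord pi = one" by (simp add: unit_g_def)
lemma ord_pipow: "ord (pi ^ k) = nsm k one" by (simp add: ord_pow ord_pi)

lemma ultra_le: "x \<noteq> 0 \<Longrightarrow> y \<noteq> 0 \<Longrightarrow> x+y \<noteq> 0 \<Longrightarrow> g \<le> ord x \<Longrightarrow> g \<le> ord y \<Longrightarrow> g \<le> ord (x+y)"
  using ord_ultra[of x y] by (simp add: min_def split: if_splits)
lemma ultra_strict: assumes "x \<noteq> 0" "ord x < ord y \<or> y = 0" shows "x + y \<noteq> 0 \<and> ord (x+y) = ord x"
proof (cases "y = 0")
  case True then show ?thesis using assms by simp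
next
  case False
  with assms have lt: "ord x < ord y" by simp
  have "x + y \<noteq> 0" using lt by (metis add_eq_0_iff ord_uminus order_less_irrefl)
  moreover have "ord x \<le> ord (x+y)" using ord_ultra[OF assms(1) False \<open>x+y\<noteq>0\<close>] lt by simp
  moreover have "ord (x+y) \<ge> ord x \<Longrightarrow> ord x \<ge> ord (x+y)"
  proof (rule ccontr)
    assume "ord x \<le> ord (x+y)" "\<not> ord (x+y) \<le> ord x"
    then have a: "ord x < ord (x+y)" by simp
    have "x = (x+y) + (-y)" by simp
    then have "min (ord (x+y)) (ord (-y)) \<le> ord x"
      using ord_ultra[of "x+y" "-y"] \<open>x+y\<noteq>0\<close> False assms(1) by force
    with a lt show False by (auto simp: min_le_iff_disj)
  qed
  ultimately show ?thesis by simp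
qed


lemma R_iff: "a \<in> R \<longleftrightarrow> a = 0 \<or> 0 \<le> ord a" by (simp add: Rset_def)
lemma R_0[simp]: "0 \<in> R" by (simp add: Rset_def)
lemma R_1[simp]: "1 \<in> R" by (simp add: Rset_def)
lemma R_add: "a \<in> R \<Longrightarrow> b \<in> R \<Longrightarrow> a + b \<in> R"
  unfolding R_iff using ultra_le[of a b 0] by (cases "a=0"; cases "b=0"; cases "a+b=0") auto
lemma R_mult: "a \<in> R \<Longrightarrow> b \<in> R \<Longrightarrow> a * b \<in> R"
  unfolding R_iff by (cases "a=0"; cases "b=0") (auto simp: ord_mult)
lemma R_uminus: "a \<in> R \<Longrightarrow> -a \<in> R" unfolding R_iff by auto
lemma R_diff: "a \<in> R \<Longrightarrow> b \<in> R \<Longrightarrow> a - b \<in> R"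
  by (metis R_add R_uminus diff_conv_add_uminus)
lemma R_pipow: "pi ^ k \<in> R" unfolding R_iff by (simp add: ord_pipow nsm_nonneg one_pos less_imp_le)

lemma cg_def': "cg a b \<longleftrightarrow> (\<exists>c\<in>R. a - b = pi ^ m * c)" by (simp add: congpi_def)
lemma cg_refl[simp]: "cg a a" unfolding cg_def' by (rule bexI[of _ 0]) auto
lemma cg_sym: "cg a b \<Longrightarrow> cg b a"
  unfolding cg_def' by (auto intro!: bexI[of _ "- _"] R_uminus simp: algebra_simps)
lemma cg_trans: "cg a b \<Longrightarrow> cg b c \<Longrightarrow> cg a c"
  unfolding cg_def' by (auto intro!: bexI[of _ "_ + _"] R_add simp: algebra_simps)
lemma cg_add: "cg a b \<Longrightarrow> cg c d \<Longrightarrow> cg (a+c) (b+d)"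
  unfolding cg_def' apply clarify
  subgoal for e f by (rule bexI[of _ "e+f"]) (auto simp: algebra_simps intro: R_add)
  done
lemma cg_mult_R: "cg a b \<Longrightarrow> c \<in> R \<Longrightarrow> cg (a*c) (b*c)"
  unfolding cg_def' apply clarify
  subgoal for e by (rule bexI[of _ "e*c"]) (auto simp: algebra_simps intro: R_mult)
  done
lemma cg_mult: "cg a b \<Longrightarrow> cg c d \<Longrightarrow> b \<in> R \<Longrightarrow> c \<in> R \<Longrightarrow> cg (a*c) (b*d)"
proof -
  assume "cg a b" "cg c d" "b \<in> R" "c \<in> R"
  have "cg (a*c) (b*c)" by (rule cg_mult_R) fact+
  moreover have "cg (c*b) (d*b)" by (rule cg_mult_R) fact+
  ultimately show ?thesis by (metis cg_trans mult.commute)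
qed

lemma cg_ord: "cg a b \<longleftrightarrow> a = b \<or> (a \<noteq> b \<and> nsm m one \<le> ord (a - b))"
proof
  assume "cg a b"
  then obtain c where c: "c \<in> R" "a - b = pi^m * c" unfolding cg_def' by blast
  show "a = b \<or> (a \<noteq> b \<and> nsm m one \<le> ord (a - b))"
  proof (cases "c = 0")
    case False
    then have "0 \<le> ord c" using c R_iff by auto
    then show ?thesis using c False by (auto simp: ord_mult ord_pipow)
  qed (use c in simp)
next
  assume h: "a = b \<or> (a \<noteq> b \<and> nsm m one \<le> ord (a - b))"
  show "cg a b"
  proof (cases "a = b")
    case False
    define c where "c = (a - b) / pi^m"
    have "a - b = pi^m * c" by (simp add: c_def)
    moreover have "c \<in> R" using h False
      by (simp add: R_iff c_def ord_divide ord_pipow)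
    ultimately show ?thesis unfolding cg_def' by blast
  qed simp
qed

lemma nsm_m_pos: "0 < nsm m one" using nsm_pos[OF one_pos] m1 by simp
lemma nsm_n_pos: "0 < nsm n one" using nsm_pos[OF one_pos] n1 by simp

lemma cg_unit: assumes "a \<in> R" "b \<in> R" "cg (a*b) 1"
  shows "a \<noteq> 0 \<and> b \<noteq> 0 \<and> ord a = 0 \<and> ord b = 0"
proof -
  have ab0: "a * b \<noteq> 0"
  proof
    assume "a * b = 0"
    then have "cg 0 1" using assms(3) by metis
    then show False using cg_ord[of 0 1] nsm_m_pos by simp
  qed
  then have nz: "a \<noteq> 0" "b \<noteq> 0" by auto
  then have ge: "0 \<le> ord a" "0 \<le> ord b" using assms R_iff by auto
  have "ord (a*b) = 0"
  proof (rule ccontr)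
    assume "ord (a*b) \<noteq> 0"
    then have pos: "0 < ord (a*b)" using ge nz by (simp add: ord_mult order_neq_le_trans)
    show False
    proof (cases "a*b = 1")
      case True then show False using pos by simp
    next
      case False
      then have "nsm m one \<le> ord (a*b - 1)" using assms(3) cg_ord by auto
      then have "one \<le> ord (a*b - 1)" using nsm_mono_n[of 1 m one] m1 one_pos by fastforce
      then have "one \<le> ord (-(a*b - 1))" by (simp only: ord_uminus)
      moreover have "one \<le> ord (a*b)" using one_least pos by simp
      moreover have "a*b + (-(a*b-1)) = 1" by simp
      ultimately have "one \<le> ord (1::'a)" using ultra_le[of "a*b" "-(a*b-1)" one] ab0 False by simp
      then show False using one_pos by simp
    qed
  qed
  then show ?thesis using nz ge by (simp add: ord_mult add_nonneg_eq_0_iff)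
qed

lemma ac_nz: "x \<noteq> 0 \<Longrightarrow> ac x \<noteq> 0 \<and> ord (ac x) = 0"
  using ac_inv[of x] cg_unit ac_R by blast

lemma ac_cancel: assumes "x \<noteq> 0" "a \<in> R" "b \<in> R" "cg (ac x * a) (ac x * b)" shows "cg a b"
proof -
  obtain u where u: "u \<in> R" "cg (ac x * u) 1" using ac_inv assms(1) by blast
  have 1: "cg (ac x * u * a) a" using cg_mult_R[OF u(2) assms(2)] by simp
  have 2: "cg (ac x * u * b) b" using cg_mult_R[OF u(2) assms(3)] by simp
  have 3: "cg (u * (ac x * a)) (u * (ac x * b))" using cg_mult_R[OF assms(4) u(1)] by (simp add: mult.commute)
  show ?thesis using 1 2 3 by (metis cg_sym cg_trans mult.commute mult.left_commute)
qed

lemma ac_one: "cg (ac 1) 1" using ac_unit[of 1] by simp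

lemma ac_pipow: "cg (ac (pi ^ k)) 1"
proof (induction k)
  case 0 then show ?case using ac_one by simp
next
  case (Suc k)
  have "cg (ac (pi * pi^k)) (ac pi * ac (pi^k))" by (rule ac_mult) auto
  moreover have "cg (ac pi * ac (pi^k)) (1 * 1)" by (rule cg_mult[OF ac_pi Suc]) (auto simp: ac_R)
  ultimately show ?case by (auto intro: cg_trans)
qed

lemma ac_pow: "x \<noteq> 0 \<Longrightarrow> cg (ac (x ^ k)) ((ac x) ^ k)"
proof (induction k)
  case 0 then show ?case using ac_one by simp
next
  case (Suc k)
  have "cg (ac (x * x^k)) (ac x * ac (x^k))" by (rule ac_mult) (use Suc in auto)
  moreover have "cg (ac x * ac (x^k)) (ac x * ac x ^ k)" by (rule cg_mult[OF cg_refl Suc(1)]) (use Suc in \<open>auto simp: ac_R\<close>)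
  ultimately show ?case by (auto intro: cg_trans)
qed

lemma ac_mult1: assumes "x \<noteq> 0" "w \<noteq> 0" "cg (ac w) 1" shows "cg (ac (x*w)) (ac x)"
proof -
  have "cg (ac (x*w)) (ac x * ac w)" using ac_mult assms by blast
  moreover have "cg (ac x * ac w) (ac x * 1)" by (rule cg_mult[OF cg_refl assms(3)]) (auto simp: ac_R)
  ultimately show ?thesis by (auto intro: cg_trans)
qed


definition divn :: "'g \<Rightarrow> bool" where "divn g \<longleftrightarrow> (\<exists>h. g = nsm n h)"

lemma divn_add: "divn a \<Longrightarrow> divn b \<Longrightarrow> divn (a+b)"
  unfolding divn_def by (auto simp: nsm_distrib[symmetric])
lemma divn_minus: "divn a \<Longrightarrow> divn (-a)"
  unfolding divn_def by (auto simp: nsm_minus[symmetric])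
lemma divn_diff: "divn a \<Longrightarrow> divn b \<Longrightarrow> divn (a-b)"
  by (metis divn_add divn_minus diff_conv_add_uminus)
lemma divn_0[simp]: "divn 0" unfolding divn_def by (rule exI[of _ 0]) simp
lemma divn_nsm: "divn (nsm (k*n) one)" unfolding divn_def
  by (rule exI[of _ "nsm k one"]) (simp add: nsm_mult[symmetric] mult.commute)


lemma rem_unique_aux: assumes "r < n" "r' < n" "r \<le> r'" "nsm r one + nsm n h = nsm r' one + nsm n h'"
  shows "r = r' \<and> h = h'"
proof -
  have eq: "nsm (r'-r) one = nsm n (h - h')"
    using assms(4) nsm_add[of r "r'-r" one] assms(3) by (simp add: nsm_diff algebra_simps)
  have "h - h' = 0"
  proof (rule ccontr)
    assume ne: "h - h' \<noteq> 0"
    show False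
    proof (cases "0 < h - h'")
      case True
      then have "one \<le> h - h'" by (rule one_least)
      then have "nsm n one \<le> nsm n (h-h')" by (rule nsm_mono)
      moreover have "nsm (r'-r) one < nsm n one" using nsm_strict_mono_n[OF _ one_pos, of "r'-r" n] assms by simp
      ultimately show False using eq by simp
    next
      case False
      then have "h - h' < 0" using ne by simp
      then have "nsm n (h-h') < 0" by (rule nsm_neg) (use n1 in auto)
      moreover have "0 \<le> nsm (r'-r) one" using one_pos by (intro nsm_nonneg) (simp add: less_imp_le)
      ultimately show False using eq by simp
    qed
  qed
  then have "nsm (r'-r) one = 0" using eq by simp
  then have "r' - r = 0" using nsm_pos[OF one_pos, of "r'-r"] by (cases "r'-r") auto
  then show ?thesis using assms \<open>h - h' = 0\<close> by simp
qed

lemma rem_unique: assumes "r < n" "r' < n" "nsm r one + nsm n h = nsm r' one + nsm n h'"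
  shows "r = r'"
proof (cases "r \<le> r'")
  case True then show ?thesis using rem_unique_aux[OF assms(1,2) True assms(3)] by simp
next
  case False then show ?thesis using rem_unique_aux[OF assms(2,1) _ assms(3)[symmetric]] by simp
qed

lemma gamma_unique: "r < n \<Longrightarrow> ord x = nsm r one + nsm n h \<Longrightarrow> gamma F n x = r"
  unfolding gamma_def
  by (rule the_equality) (auto dest: rem_unique)

lemma gamma_spec: "gamma F n x < n \<and> (\<exists>h. ord x = nsm (gamma F n x) one + nsm n h)"
proof -
  obtain r h where "r < n" "ord x = nsm r one + nsm n h" using zgroup[OF n1] by blast
  then show ?thesis using gamma_unique by auto
qed

lemma gamma_eq_iff: "gamma F n x = gamma F n y \<longleftrightarrow> divn (ord x - ord y)"
proof -
  obtain h where h: "ord x = nsm (gamma F n x) one + nsm n h" using gamma_spec by blast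
  obtain h' where h': "ord y = nsm (gamma F n y) one + nsm n h'" using gamma_spec by blast
  show ?thesis
  proof
    assume "gamma F n x = gamma F n y"
    then show "divn (ord x - ord y)" unfolding divn_def using h h'
      by (intro exI[of _ "h - h'"]) (simp add: nsm_diff)
  next
    assume "divn (ord x - ord y)"
    then obtain k where k: "ord x - ord y = nsm n k" unfolding divn_def by blast
    then have "ord x = nsm (gamma F n y) one + nsm n (h' + k)" using h' by (simp add: nsm_distrib algebra_simps)
    then show "gamma F n x = gamma F n y" using gamma_unique gamma_spec by blast
  qed
qed

lemma lsim_refl[simp]: "lsim F n m x x" by (simp add: lsim_def)
lemma lsim_sym: "lsim F n m x y \<Longrightarrow> lsim F n m y x" by (auto simp: lsim_def cg_sym)
lemma lsim_trans: "lsim F n m x y \<Longrightarrow> lsim F n m y z \<Longrightarrow> lsim F n m x z"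
  by (auto simp: lsim_def intro: cg_trans)
lemma rho_eq_iff: "rho F n m x = rho F n m y \<longleftrightarrow> lsim F n m x y"
  unfolding rho_def by (auto intro: lsim_trans lsim_sym)
lemma mem_rho: "y \<in> rho F n m x \<longleftrightarrow> lsim F n m x y" by (simp add: rho_def)
lemma rho_0: "rho F n m 0 = {0}" by (auto simp: rho_def lsim_def)
lemma rho_nz: "x \<noteq> 0 \<Longrightarrow> rho F n m x \<noteq> {0}"
  using mem_rho[of x x] by auto
lemma rho_eq0: "rho F n m x = {0} \<longleftrightarrow> x = 0" using rho_nz rho_0 by auto
lemma lsim_nz: "lsim F n m x y \<Longrightarrow> x \<noteq> 0 \<longleftrightarrow> y \<noteq> 0" by (auto simp: lsim_def)

lemma lemP: assumes "z \<noteq> 0" "w \<noteq> 0" "divn (ord w)" "cg (ac w) 1" shows "lsim F n m z (z*w)"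
proof -
  have "gamma F n z = gamma F n (z*w)"
    unfolding gamma_eq_iff using assms by (simp add: ord_mult divn_minus)
  moreover have "cg (ac z) (ac (z*w))" using ac_mult1[OF assms(1,2,4)] by (rule cg_sym)
  ultimately show ?thesis using assms by (simp add: lsim_def)
qed

lemma lemQ: assumes "lsim F n m u x" "u \<noteq> 0"
  shows "x \<noteq> 0 \<and> divn (ord (x/u)) \<and> cg (ac (x/u)) 1"
proof -
  have x: "x \<noteq> 0" and g: "gamma F n u = gamma F n x" and a: "cg (ac u) (ac x)"
    using assms by (auto simp: lsim_def)
  have "divn (ord u - ord x)" using g gamma_eq_iff by blast
  then have "divn (-(ord u - ord x))" by (rule divn_minus)
  then have "divn (ord (x/u))" using x assms(2) by (simp add: ord_divide)
  moreover
  have xu: "x = u * (x/u)" using assms(2) by simp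
  have "cg (ac x) (ac u * ac (x/u))" using ac_mult[of u "x/u"] x assms(2) xu by simp
  then have "cg (ac u * ac (x/u)) (ac u * 1)" using a by (auto intro: cg_trans cg_sym)
  then have "cg (ac (x/u)) 1" by (rule ac_cancel[OF assms(2) ac_R R_1])
  ultimately show ?thesis using x by simp
qed

lemma lemU: "v \<noteq> 0 \<Longrightarrow> ord v = 0 \<Longrightarrow> cg (ac v) 1 \<Longrightarrow> cg v 1"
  using ac_unit cg_sym cg_trans by blast

lemma lemE: assumes "e = 0 \<or> nsm m one \<le> ord e"
  shows "1 + e \<noteq> 0 \<and> ord (1+e) = 0 \<and> cg (ac (1+e)) 1"
proof -
  have "ord (1::'a) < ord e \<or> e = 0" using assms nsm_m_pos by auto
  then have h: "1 + e \<noteq> 0 \<and> ord (1+e) = ord (1::'a)"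
    using ultra_strict[of 1 e] by auto
  moreover have "cg (1+e) 1" unfolding cg_ord using assms by auto
  ultimately show ?thesis using ac_unit[of "1+e"] by (auto intro: cg_trans)
qed

lemma perturb: assumes "z \<noteq> 0" "e = 0 \<or> ord z + nsm m one \<le> ord e"
  shows "z + e \<noteq> 0 \<and> ord (z+e) = ord z \<and> lsim F n m z (z+e)"
proof -
  have "e/z = 0 \<or> nsm m one \<le> ord (e/z)" using assms
    by (cases "e = 0") (auto simp: ord_divide algebra_simps)
  from lemE[OF this] have w: "1 + e/z \<noteq> 0" "ord (1 + e/z) = 0" "cg (ac (1+e/z)) 1" by auto
  have ze: "z + e = z * (1 + e/z)" using assms(1) by (simp add: algebra_simps)
  show ?thesis unfolding ze using w assms(1) lemP[OF assms(1) w(1) _ w(3)]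
    by (simp add: ord_mult)
qed

lemma lemML: assumes nz: "u \<noteq> 0" "d \<noteq> 0" and s1: "lsim F n m u x" and s2: "lsim F n m d y"
  and sh: "ord x - ord u = ord y - ord d" and ud: "u + d \<noteq> 0" and le: "ord (u+d) \<le> ord d"
  shows "x + y \<noteq> 0 \<and> ord (x+y) = ord (u+d) + (ord x - ord u) \<and> lsim F n m (u+d) (x+y)"
proof -
  define q where "q = x/u"
  define q' where "q' = y/d"
  from lemQ[OF s1 nz(1)] have x: "x \<noteq> 0" and q: "divn (ord q)" "cg (ac q) 1" by (auto simp: q_def)
  from lemQ[OF s2 nz(2)] have y: "y \<noteq> 0" and q': "cg (ac q') 1" by (auto simp: q'_def)
  have qnz: "q \<noteq> 0" "q' \<noteq> 0" using x y nz by (auto simp: q_def q'_def)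
  have oq: "ord q = ord q'" using sh x y nz by (simp add: q_def q'_def ord_divide)
  define v where "v = q'/q"
  have vnz: "v \<noteq> 0" and ov: "ord v = 0" using qnz oq by (auto simp: v_def ord_divide)
  have "q' = q * v" using qnz by (simp add: v_def)
  then have "cg (ac q') (ac q * ac v)" using ac_mult qnz vnz by simp
  then have "cg (1 * 1) (ac q * ac v)" using q' by (auto intro: cg_trans cg_sym)
  moreover have "cg (ac q * ac v) (1 * ac v)" by (rule cg_mult[OF q(2) cg_refl]) (auto simp: ac_R)
  ultimately have "cg (ac v) 1" by (auto intro: cg_trans cg_sym)
  then have v1: "cg v 1" using lemU vnz ov by blast
  define e where "e = d * (v - 1)"
  have e: "e = 0 \<or> ord (u+d) + nsm m one \<le> ord e"
  proof (cases "v = 1")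
    case False
    then have "nsm m one \<le> ord (v - 1)" using v1 cg_ord by auto
    then show ?thesis using False nz le by (auto simp: e_def ord_mult add_mono)
  qed (simp add: e_def)
  from perturb[OF ud e] have pe: "u + d + e \<noteq> 0" "ord (u+d+e) = ord (u+d)" "lsim F n m (u+d) (u+d+e)" by auto
  have xy: "x + y = (u+d+e) * q"
    using nz qnz by (simp add: e_def v_def q_def q'_def field_simps)
  have "lsim F n m (u+d+e) ((u+d+e)*q)" by (rule lemP[OF pe(1) qnz(1) q])
  then show ?thesis unfolding xy using pe qnz x nz
    by (auto simp: ord_mult q_def ord_divide intro: lsim_trans)
qed

end

context zfl begin

lemma R_pow: "a \<in> R \<Longrightarrow> a ^ k \<in> R" by (induction k) (auto intro: R_mult)

lemma cg_pow1: "cg a 1 \<Longrightarrow> a \<in> R \<Longrightarrow> cg (a^k) 1"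
proof (induction k)
  case (Suc k)
  have "cg (a * a^k) (1 * 1)" by (rule cg_mult[OF Suc(2) Suc(1)]) (use Suc R_pow in auto)
  then show ?case by simp
qed simp

lemma rep_exists: assumes "y \<noteq> 0"
  shows "\<exists>x. lsim F n m y x \<and> 0 \<le> ord x \<and> ord x < nsm n one"
proof -
  obtain h where h: "ord y = nsm (gamma F n y) one + nsm n h" and gl: "gamma F n y < n"
    using gamma_spec by blast
  obtain z where z: "z \<noteq> 0" "ord z = h" using ord_surj by blast
  obtain u where u: "u \<in> R" "cg (ac z * u) 1" using ac_inv z by blast
  from cg_unit[OF ac_R u] have unz: "u \<noteq> 0" "ord u = 0" by auto
  have zu: "cg (ac (z*u)) 1"
  proof -
    have "cg (ac (z*u)) (ac z * ac u)" using ac_mult z unz by blast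
    moreover have "cg (ac z * ac u) (ac z * u)" by (rule cg_mult[OF cg_refl ac_unit[OF unz]]) (auto simp: ac_R)
    ultimately show ?thesis using u by (auto intro: cg_trans)
  qed
  define w where "w = (z*u)^n"
  have wnz: "w \<noteq> 0" using z unz by (simp add: w_def)
  have ow: "ord w = nsm n h" using z unz by (simp add: w_def ord_pow ord_mult)
  have aw: "cg (ac w) 1"
  proof -
    have "cg (ac w) ((ac (z*u))^n)" unfolding w_def by (rule ac_pow) (use z unz in simp)
    moreover have "cg ((ac (z*u))^n) 1" by (rule cg_pow1[OF zu ac_R])
    ultimately show ?thesis by (rule cg_trans)
  qed
  define x where "x = y / w"
  have xnz: "x \<noteq> 0" using assms wnz by (simp add: x_def)
  have "lsim F n m x (x*w)" by (rule lemP[OF xnz wnz _ aw]) (auto simp: ow divn_def)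
  then have "lsim F n m y x" using wnz by (simp add: x_def lsim_sym)
  moreover have "ord x = nsm (gamma F n y) one" using h ow assms wnz by (simp add: x_def ord_divide)
  ultimately show ?thesis using gl nsm_nonneg[of one] one_pos nsm_strict_mono_n[OF gl one_pos]
    by (intro exI[of _ x]) auto
qed

lemma ord_small: assumes "0 \<le> ord x" "ord x < nsm n one" shows "ord x = nsm (gamma F n x) one"
proof -
  obtain h where h: "ord x = nsm (gamma F n x) one + nsm n h" and gl: "gamma F n x < n"
    using gamma_spec by blast
  have "h = 0"
  proof (rule ccontr)
    assume ne: "h \<noteq> 0"
    show False
    proof (cases "0 < h")
      case True
      then have "nsm n one \<le> nsm n h" using one_least nsm_mono by blast
      moreover have "0 \<le> nsm (gamma F n x) one" by (intro nsm_nonneg) (simp add: less_imp_le one_pos)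
      ultimately have "nsm n one \<le> nsm (gamma F n x) one + nsm n h" using add_mono by fastforce
      then show False using assms h by simp
    next
      case False
      then have "0 < -h" using ne by simp
      then have "nsm n one \<le> nsm n (-h)" using one_least nsm_mono by blast
      then have "nsm n h \<le> - nsm n one" by (metis le_minus_iff nsm_minus)
      moreover have "nsm (gamma F n x) one < nsm n one" using nsm_strict_mono_n[OF gl one_pos] .
      ultimately have "nsm (gamma F n x) one + nsm n h < 0" using add_less_le_mono[of "nsm (gamma F n x) one" "nsm n one" "nsm n h" "- nsm n one"] by simp
      then show False using assms h by simp
    qed
  qed
  then show ?thesis using h by simp
qed

lemma rep_props: assumes "y \<noteq> 0"
  shows "lsim F n m y (rep F n (rho F n m y)) \<and> ord (rep F n (rho F n m y)) = nsm (gamma F n y) one"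
proof -
  have ex: "\<exists>x. x \<in> rho F n m y \<and> 0 \<le> ord x \<and> ord x < nsm n one"
    using rep_exists[OF assms] by (simp add: mem_rho)
  define x where "x = rep F n (rho F n m y)"
  have x: "x \<in> rho F n m y \<and> 0 \<le> ord x \<and> ord x < nsm n one"
    unfolding x_def rep_def by (rule someI_ex[OF ex])
  then have l: "lsim F n m y x" by (simp add: mem_rho)
  then have "gamma F n x = gamma F n y" using assms by (simp add: lsim_def)
  moreover have "ord x = nsm (gamma F n x) one" using x by (intro ord_small) auto
  ultimately have "ord x = nsm (gamma F n y) one" by simp
  then show ?thesis using l unfolding x_def by simp
qed

lemma pick_rho: "pick (rho F n m y) \<in> rho F n m y"
  unfolding pick_def using mem_rho[of y y] by (metis lsim_refl someI_ex)

lemma gamma_pick: "y \<noteq> 0 \<Longrightarrow> gamma F n (pick (rho F n m y)) = gamma F n y"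
  using pick_rho[of y] by (simp add: mem_rho lsim_def)

lemma gamma_shift: assumes "ord y = ord x + nsm j one"
  shows "gamma F n y = (gamma F n x + j) mod n"
proof -
  obtain h where h: "ord x = nsm (gamma F n x) one + nsm n h" using gamma_spec by blast
  define g where "g = gamma F n x"
  have "g + j = (g+j) mod n + n * ((g+j) div n)" by simp
  then have "nsm (g+j) one = nsm ((g+j) mod n) one + nsm n (nsm ((g+j) div n) one)"
    by (metis nsm_add nsm_mult)
  then have "ord y = nsm ((g+j) mod n) one + nsm n (h + nsm ((g+j) div n) one)"
    using assms h by (simp add: g_def nsm_distrib nsm_add algebra_simps)
  then show ?thesis unfolding g_def[symmetric] by (rule gamma_unique[rotated]) (use n1 in simp)
qed

lemma ladd_lemma: assumes nz: "x \<noteq> 0" "y \<noteq> 0" and oy: "ord y = ord x + nsm j one"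
  and xy: "x + y \<noteq> 0" "ord (x+y) \<le> ord y"
  shows "ladd F n m ((gamma F n x + j) div n) (rho F n m x) (rho F n m y) = rho F n m (x+y)"
proof -
  define g where "g = gamma F n x"
  define r where "r = (g + j) div n"
  have gy: "gamma F n y = (g + j) mod n" using gamma_shift[OF oy] by (simp add: g_def)
  have A: "rho F n m x \<noteq> {0}" "rho F n m y \<noteq> {0}" using nz rho_nz by auto
  have inD: "r = 0 \<Longrightarrow> inD F n m (+) (rho F n m x) (rho F n m y)"
  proof -
    assume r0: "r = 0"
    show ?thesis unfolding inD_def
    proof (intro allI impI)
      fix x' y' assume a: "rho F n m x' = rho F n m x" "rho F n m y' = rho F n m y" "x' \<noteq> 0" "y' \<noteq> 0" "ord x' = ord y'"
      have s: "lsim F n m x x'" "lsim F n m y y'" using a(1,2) by (auto simp: rho_eq_iff lsim_sym)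
      have "gamma F n x' = gamma F n y'" using a(5) by (simp add: gamma_eq_iff)
      then have "gamma F n x = gamma F n y" using s nz by (auto simp: lsim_def)
      then have "g = (g+j) mod n" using gy g_def by simp
      moreover have "g + j < n" using r0 r_def n1 by (simp add: div_eq_0_iff)
      ultimately have j0: "j = 0" by simp
      have oxy: "ord (x+y) = ord x" using j0 oy xy ultra_le[OF nz xy(1), of "ord x"] by simp
      from lemML[OF nz s _ xy] a oy j0 oxy show "x' + y' \<noteq> 0 \<and> ord (x' + y') = ord x'" by simp
    qed
  qed
  define a where "a = rep F n (rho F n m x)"
  define b where "b = rep F n (rho F n m y)"
  from rep_props[OF nz(1)] have a: "lsim F n m x a" "ord a = nsm g one" by (auto simp: a_def g_def)
  from rep_props[OF nz(2)] have b: "lsim F n m y b" "ord b = nsm ((g+j) mod n) one" by (auto simp: b_def gy)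
  have bnz: "b \<noteq> 0" using b lsim_nz nz by blast
  define y' where "y' = b * pi ^ (r*n)"
  have "lsim F n m b y'" unfolding y'_def
    by (rule lemP[OF bnz]) (auto simp: ord_pipow divn_nsm ac_pipow)
  then have y': "lsim F n m y y'" using b by (blast intro: lsim_trans)
  have "(g+j) mod n + r*n = g + j" by (simp add: r_def)
  then have oy': "ord y' = nsm (g+j) one" using bnz b
    by (simp add: y'_def ord_mult ord_pipow flip: nsm_add)
  have sh: "ord a - ord x = ord y' - ord y"
    using oy' oy a by (simp add: nsm_add algebra_simps)
  from lemML[OF nz a(1) y' sh xy] have "lsim F n m (x+y) (a+y')" by simp
  then have "rho F n m (a + pi^(r*n) * b) = rho F n m (x+y)"
    by (simp add: rho_eq_iff y'_def mult.commute lsim_sym)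
  then show ?thesis using A inD
    unfolding ladd_def a_def b_def r_def g_def by auto
qed

end


definition FTrue :: "'a fm" where "FTrue = FEqK (KConst undefined) (KConst undefined)"
definition FOr :: "'a fm \<Rightarrow> 'a fm \<Rightarrow> 'a fm" where "FOr a b = FNot (FAnd (FNot a) (FNot b))"
fun FDisj :: "'a fm list \<Rightarrow> 'a fm" where
  "FDisj [] = FNot FTrue"
| "FDisj (a # as) = FOr a (FDisj as)"
fun FConj :: "'a fm list \<Rightarrow> 'a fm" where
  "FConj [] = FTrue"
| "FConj (a # as) = FAnd a (FConj as)"

lemma sat_FTrue[simp]: "sat F eL eK FTrue" by (simp add: FTrue_def)
lemma fwf_FTrue[simp]: "fwf P FTrue" by (simp add: FTrue_def)
lemma sat_FOr[simp]: "sat F eL eK (FOr a b) \<longleftrightarrow> sat F eL eK a \<or> sat F eL eK b" by (simp add: FOr_def)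
lemma fwf_FOr[simp]: "fwf P (FOr a b) \<longleftrightarrow> fwf P a \<and> fwf P b" by (simp add: FOr_def)
lemma sat_FDisj[simp]: "sat F eL eK (FDisj as) \<longleftrightarrow> (\<exists>a\<in>set as. sat F eL eK a)" by (induction as) auto
lemma fwf_FDisj[simp]: "fwf P (FDisj as) \<longleftrightarrow> (\<forall>a\<in>set as. fwf P a)" by (induction as) auto
lemma sat_FConj[simp]: "sat F eL eK (FConj as) \<longleftrightarrow> (\<forall>a\<in>set as. sat F eL eK a)" by (induction as) auto
lemma fwf_FConj[simp]: "fwf P (FConj as) \<longleftrightarrow> (\<forall>a\<in>set as. fwf P a)" by (induction as) auto

fun lvb :: "'a lterm \<Rightarrow> nat" where
  "lvb (LVar i a b) = Suc i"
| "lvb (LRho a b t) = 0"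
| "lvb (LProj a b u) = lvb u"
| "lvb (LAdd a b c u v) = max (lvb u) (lvb v)"
| "lvb (LSub a b c u v) = max (lvb u) (lvb v)"

fun fb :: "'a fm \<Rightarrow> nat" where
  "fb (FEqK s t) = 0"
| "fb (FDivK s t) = 0"
| "fb (FEqL u v) = max (lvb u) (lvb v)"
| "fb (FCong a b c u) = lvb u"
| "fb (FNot \<phi>) = fb \<phi>"
| "fb (FAnd \<phi> \<psi>) = max (fb \<phi>) (fb \<psi>)"
| "fb (FExL i a b \<phi>) = max (Suc i) (fb \<phi>)"

lemma leval_coinc: "(\<And>i a b. i < lvb u \<Longrightarrow> e (i,a,b) = e' (i,a,b)) \<Longrightarrow> leval F e eK u = leval F e' eK u"
  by (induction u) auto

lemma sat_coinc: "(\<And>i a b. i < fb \<phi> \<Longrightarrow> e (i,a,b) = e' (i,a,b)) \<Longrightarrow> sat F e eK \<phi> = sat F e' eK \<phi>"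
proof (induction \<phi> arbitrary: e e')
  case (FEqL u v)
  have "leval F e eK u = leval F e' eK u" by (rule leval_coinc) (use FEqL in auto)
  moreover have "leval F e eK v = leval F e' eK v" by (rule leval_coinc) (use FEqL in auto)
  ultimately show ?case by simp
next
  case (FCong a b c u)
  have "leval F e eK u = leval F e' eK u" by (rule leval_coinc) (use FCong in auto)
  then show ?case by simp
next
  case (FAnd \<phi> \<psi>)
  have "sat F e eK \<phi> = sat F e' eK \<phi>" by (rule FAnd.IH(1)) (use FAnd.prems in auto)
  moreover have "sat F e eK \<psi> = sat F e' eK \<psi>" by (rule FAnd.IH(2)) (use FAnd.prems in auto)
  ultimately show ?case by simp
next
  case (FExL i a b \<phi>)
  have "\<And>A. sat F (e((i,a,b) := A)) eK \<phi> = sat F (e'((i,a,b) := A)) eK \<phi>"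
    by (rule FExL.IH) (use FExL.prems in auto)
  then show ?case by simp
next
  case (FNot \<phi>)
  have "sat F e eK \<phi> = sat F e' eK \<phi>" by (rule FNot.IH) (use FNot.prems in auto)
  then show ?case by simp
qed simp_all

lemma envL_snoc: "length ls = r \<Longrightarrow> envL n m (ls @ [A]) = (envL n m (ls @ [B]))((r,n,m) := A)"
  by (auto simp: envL_def nth_append fun_eq_iff)

fun kt :: "'a list \<Rightarrow> nat \<Rightarrow> 'a \<Rightarrow> 'a kterm" where
  "kt [] i b = KConst b"
| "kt (c # cs) i b = KAdd (KScal c (KVar i)) (kt cs (Suc i) b)"

definition kp :: "'a list \<times> 'a \<Rightarrow> 'a kterm" where "kp p = kt (fst p) 0 (snd p)"

lemma keval_kt: "length cs + i \<le> length xs \<Longrightarrow>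
   keval (envK xs) (kt cs i b) = sum_list (map2 (*) cs (drop i xs)) + (b::'a::field)"
proof (induction cs arbitrary: i)
  case (Cons c cs)
  have "drop i xs = xs ! i # drop (Suc i) xs" using Cons.prems by (simp add: Cons_nth_drop_Suc)
  then show ?case using Cons by (simp add: envK_def)
qed simp

lemma keval_kp: "length (fst p) = length xs \<Longrightarrow> keval (envK xs) (kp p) = peval p xs"
  by (simp add: kp_def keval_kt peval_def)

lemma kwf_kt: "set cs \<subseteq> P \<Longrightarrow> kwf P (kt cs i b)"
  by (induction cs arbitrary: i) auto

lemma kwf_kp: "set (fst p) \<subseteq> P \<Longrightarrow> kwf P (kp p)"
  by (simp add: kp_def kwf_kt)

definition pdiff :: "'a::field list \<times> 'a \<Rightarrow> 'a list \<times> 'a \<Rightarrow> 'a list \<times> 'a" where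
  "pdiff p q = (map2 (-) (fst p) (fst q), snd p - snd q)"
definition pscal :: "'a::field \<Rightarrow> 'a list \<times> 'a \<Rightarrow> 'a list \<times> 'a" where
  "pscal c p = (map ((*) c) (fst p), c * snd p)"

lemma sum_map2_diff: "length as = length xs \<Longrightarrow> length bs = length xs \<Longrightarrow>
  sum_list (map2 (*) (map2 (-) as bs) xs) = sum_list (map2 (*) as xs) - sum_list (map2 (*) bs xs)"
  for as :: "'a::field list"
proof (induction xs arbitrary: as bs)
  case (Cons x xs)
  then obtain a as' b bs' where "as = a # as'" "bs = b # bs'" by (cases as; cases bs) auto
  then show ?case using Cons by (simp add: algebra_simps)
qed simp

lemma sum_map2_scal: "sum_list (map2 (*) (map ((*) c) as) xs) = c * sum_list (map2 (*) as xs)"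
  for as :: "'a::field list"
proof (induction xs arbitrary: as)
  case (Cons x xs)
  then show ?case by (cases as) (auto simp: algebra_simps)
qed simp

lemma peval_pdiff: "length (fst p) = length xs \<Longrightarrow> length (fst q) = length xs \<Longrightarrow>
  peval (pdiff p q) xs = peval p xs - peval q xs"
  by (simp add: peval_def pdiff_def sum_map2_diff)
lemma peval_pscal: "peval (pscal c p) xs = c * peval p xs"
  by (simp add: peval_def pscal_def sum_map2_scal algebra_simps)

lemma Ppi_closed:
  shows Ppi_pi: "zpi F \<in> Ppi F" and Ppi_1: "1 \<in> Ppi F"
  and Ppi_add: "x \<in> Ppi F \<Longrightarrow> y \<in> Ppi F \<Longrightarrow> x + y \<in> Ppi F"
  and Ppi_diff: "x \<in> Ppi F \<Longrightarrow> y \<in> Ppi F \<Longrightarrow> x - y \<in> Ppi F"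
  and Ppi_mult: "x \<in> Ppi F \<Longrightarrow> y \<in> Ppi F \<Longrightarrow> x * y \<in> Ppi F"
  and Ppi_inv: "x \<in> Ppi F \<Longrightarrow> inverse x \<in> Ppi F"
  unfolding Ppi_def by auto

lemma Ppi_pow: "x \<in> Ppi F \<Longrightarrow> x ^ k \<in> Ppi F"
  by (induction k) (auto intro: Ppi_mult Ppi_1)

lemma linpoly_pdiff: "linpoly F k p \<Longrightarrow> linpoly F k q \<Longrightarrow> linpoly F k (pdiff p q)"
  unfolding linpoly_def pdiff_def
  by (auto simp: set_zip intro!: Ppi_diff)
lemma linpoly_pscal: "linpoly F k p \<Longrightarrow> c \<in> Ppi F \<Longrightarrow> linpoly F k (pscal c p)"
  unfolding linpoly_def pscal_def by (auto intro!: Ppi_mult)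



definition pcell :: "('a::field, 'g::linordered_ab_group_add) zfield \<Rightarrow> nat \<Rightarrow> nat \<Rightarrow> nat \<Rightarrow> nat \<Rightarrow>
   'a fm \<Rightarrow> 'a fm \<Rightarrow> 'a fm \<Rightarrow> ('a list \<times> 'a) list \<Rightarrow> ('a list \<times> 'a) list \<Rightarrow> 'a list \<times> 'a \<Rightarrow>
   ('a set list \<times> 'a list \<times> 'a) set" where
  "pcell F n m r k fnm fK fD lows ups c = {(ls, xs, t). length ls = r \<and> length xs = k \<and> set ls \<subseteq> Lam F n m \<and>
     sat F (envL n m ls) (envK []) fnm \<and> sat F (envL n m []) (envK xs) fK \<and>
     (\<forall>a\<in>set lows. vlt F (peval a xs) (t - peval c xs)) \<and>
     (\<forall>a\<in>set ups. vlt F (t - peval c xs) (peval a xs)) \<and>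
     sat F (envL n m (ls @ [rho F n m (t - peval c xs)])) (envK xs) fD}"

definition pwf :: "('a::field, 'g::linordered_ab_group_add) zfield \<Rightarrow> nat \<Rightarrow>
   'a fm \<Rightarrow> 'a fm \<Rightarrow> 'a fm \<Rightarrow> ('a list \<times> 'a) list \<Rightarrow> ('a list \<times> 'a) list \<Rightarrow> 'a list \<times> 'a \<Rightarrow> bool" where
  "pwf F k fnm fK fD lows ups c \<longleftrightarrow> fwf (Ppi F) fnm \<and> fwf (Ppi F) fK \<and> fwf (Ppi F) fD \<and>
     (\<forall>a\<in>set lows. linpoly F k a) \<and> (\<forall>a\<in>set ups. linpoly F k a) \<and> linpoly F k c"

lemma rho_Lam[simp]: "rho F n m x \<in> Lam F n m" by (simp add: Lam_def)

lemma pcell_is_cell: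
  assumes "pwf F k fnm fK fD lows ups c" "length lows \<le> 1" "length ups \<le> 1"
  shows "is_cell F n m r k (pcell F n m r k fnm fK fD lows ups c)"
proof -
  define Dnm where "Dnm = {(ls, xs). length ls = r \<and> length xs = 0 \<and> set ls \<subseteq> Lam F n m \<and>
                     sat F (envL n m ls) (envK xs) fnm}"
  define DK where "DK = {(ls :: 'a set list, xs). length ls = 0 \<and> length xs = k \<and> set ls \<subseteq> Lam F n m \<and>
                     sat F (envL n m ls) (envK xs) fK}"
  define D where "D = {(ls, xs). length ls = Suc r \<and> length xs = k \<and> set ls \<subseteq> Lam F n m \<and>
                     sat F (envL n m ls) (envK xs) fD}"
  define a1 where "a1 = (case lows of [] \<Rightarrow> c | a # _ \<Rightarrow> a)"
  define a2 where "a2 = (case ups of [] \<Rightarrow> c | a # _ \<Rightarrow> a)"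
  have l1: "set lows = (if lows = [] then {} else {a1})" using assms(2) unfolding a1_def
    by (cases lows) auto
  have l2: "set ups = (if ups = [] then {} else {a2})" using assms(3) unfolding a2_def
    by (cases ups) auto
  have lp: "linpoly F k a1" "linpoly F k a2" using assms(1) unfolding pwf_def a1_def a2_def
    by (auto split: list.splits)
  show ?thesis unfolding is_cell_def
  proof (intro exI conjI)
    show "definable F n m r 0 Dnm" unfolding definable_def Dnm_def using assms(1) pwf_def by blast
    show "definable F n m 0 k DK" unfolding definable_def DK_def using assms(1) pwf_def by blast
    show "definable F n m (Suc r) k D" unfolding definable_def D_def using assms(1) pwf_def by blast
    show "pcell F n m r k fnm fK fD lows ups c =
      {(ls, xs, t). (ls, []) \<in> Dnm \<and> ([], xs) \<in> DK \<and>
         box F (lows \<noteq> []) (peval a1 xs) (t - peval c xs) \<and>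
         box F (ups \<noteq> []) (t - peval c xs) (peval a2 xs) \<and>
         (ls @ [rho F n m (t - peval c xs)], xs) \<in> D}"
      unfolding pcell_def Dnm_def DK_def D_def box_def
      by (subst l1, subst l2) (auto simp: envK_def)
  qed (use lp assms(1) in \<open>auto simp: pwf_def\<close>)
qed

definition decomp :: "('a::field, 'g::linordered_ab_group_add) zfield \<Rightarrow> nat \<Rightarrow> nat \<Rightarrow> nat \<Rightarrow> nat \<Rightarrow>
   ('a set list \<times> 'a list \<times> 'a) set \<Rightarrow> bool" where
  "decomp F n m r k S \<longleftrightarrow> (\<exists>Cs. finite Cs \<and> (\<forall>C\<in>Cs. is_cell F n m r k C) \<and> pairwise disjnt Cs \<and> \<Union>Cs = S)"

lemma decomp_empty: "decomp F n m r k {}"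
  unfolding decomp_def by (rule exI[of _ "{}"]) auto

lemma decomp_cell: "is_cell F n m r k C \<Longrightarrow> decomp F n m r k C"
  unfolding decomp_def by (rule exI[of _ "{C}"]) auto

lemma decomp_Un: assumes "decomp F n m r k A" "decomp F n m r k B" "A \<inter> B = {}"
  shows "decomp F n m r k (A \<union> B)"
proof -
  obtain CA where A: "finite CA" "\<forall>C\<in>CA. is_cell F n m r k C" "pairwise disjnt CA" "\<Union>CA = A"
    using assms(1) unfolding decomp_def by blast
  obtain CB where B: "finite CB" "\<forall>C\<in>CB. is_cell F n m r k C" "pairwise disjnt CB" "\<Union>CB = B"
    using assms(2) unfolding decomp_def by blast
  have "pairwise disjnt (CA \<union> CB)"
    unfolding pairwise_def
  proof (intro ballI impI)
    fix X Y assume X: "X \<in> CA \<union> CB" and Y: "Y \<in> CA \<union> CB" and ne: "X \<noteq> Y"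
    show "disjnt X Y"
    proof (cases "X \<in> CA"; cases "Y \<in> CA")
      assume "X \<in> CA" "Y \<in> CA" then show ?thesis using A(3) ne by (auto simp: pairwise_def)
    next
      assume "X \<in> CA" "Y \<notin> CA"
      then have "X \<subseteq> A" "Y \<subseteq> B" using A(4) B(4) Y by auto
      then show ?thesis using assms(3) by (auto simp: disjnt_def)
    next
      assume "X \<notin> CA" "Y \<in> CA"
      then have "X \<subseteq> B" "Y \<subseteq> A" using A(4) B(4) X by auto
      then show ?thesis using assms(3) by (auto simp: disjnt_def)
    next
      assume "X \<notin> CA" "Y \<notin> CA" then show ?thesis using B(3) ne X Y by (auto simp: pairwise_def)
    qed
  qed
  then show ?thesis unfolding decomp_def using A B
    by (intro exI[of _ "CA \<union> CB"]) auto
qed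

lemma decomp_split: assumes "decomp F n m r k {x\<in>S. P x}" "decomp F n m r k {x\<in>S. \<not> P x}"
  shows "decomp F n m r k S"
proof -
  have "S = {x\<in>S. P x} \<union> {x\<in>S. \<not> P x}" by auto
  then show ?thesis using decomp_Un[OF assms] by auto
qed

lemma decomp_eq: "decomp F n m r k A \<Longrightarrow> A = B \<Longrightarrow> decomp F n m r k B" by simp

lemma keval_kp': "linpoly F k a \<Longrightarrow> length xs = k \<Longrightarrow> keval (envK xs) (kp a) = peval a xs"
  by (simp add: keval_kp linpoly_def)

lemma kwf_kp': "linpoly F k a \<Longrightarrow> kwf (Ppi F) (kp a)"
  by (simp add: kwf_kp linpoly_def)

lemma lows_merge: "vlt F A u \<and> vlt F A' u \<longleftrightarrow>
   (vdiv F A' A \<and> vlt F A u) \<or> (\<not> vdiv F A' A \<and> vlt F A' u)"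
  unfolding vlt_def vdiv_def by auto

lemma ups_merge: "vlt F u A \<and> vlt F u A' \<longleftrightarrow>
   (vdiv F A A' \<and> vlt F u A) \<or> (\<not> vdiv F A A' \<and> vlt F u A')"
  unfolding vlt_def vdiv_def by auto

lemma long2: "\<not> length xs \<le> 1 \<Longrightarrow> \<exists>a b r. xs = a # b # r"
  by (cases xs) (auto simp: neq_Nil_conv)

lemma lows_1: "vdiv F A' A \<Longrightarrow> vlt F A u \<Longrightarrow> vlt F A' u"
  unfolding vlt_def vdiv_def by auto
lemma lows_2: "\<not> vdiv F A' A \<Longrightarrow> vlt F A' u \<Longrightarrow> vlt F A u"
  unfolding vlt_def vdiv_def by auto
lemma ups_1: "vdiv F A A' \<Longrightarrow> vlt F u A \<Longrightarrow> vlt F u A'"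
  unfolding vlt_def vdiv_def by auto
lemma ups_2: "\<not> vdiv F A A' \<Longrightarrow> vlt F u A' \<Longrightarrow> vlt F u A"
  unfolding vlt_def vdiv_def by auto

lemma merge_aux: "length lows + length ups = N \<Longrightarrow> pwf F k fnm fK fD lows ups c \<Longrightarrow>
   decomp F n m r k (pcell F n m r k fnm fK fD lows ups c)"
proof (induction N arbitrary: fK lows ups rule: less_induct)
  case (less N)
  show ?case
  proof (cases "length lows \<le> 1 \<and> length ups \<le> 1")
    case True
    then show ?thesis using pcell_is_cell less.prems decomp_cell by blast
  next
    case False
    then consider (L) a a' rest where "lows = a # a' # rest" | (U) a a' rest where "ups = a # a' # rest"
      using long2[of lows] long2[of ups] by blast
    then show ?thesis
    proof cases
      case L
      define R where "R = FDivK (kp a') (kp a)"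
      have la: "linpoly F k a" "linpoly F k a'" using less.prems L by (auto simp: pwf_def)
      have wf1: "pwf F k fnm (FAnd fK R) fD (a # rest) ups c" and wf2: "pwf F k fnm (FAnd fK (FNot R)) fD (a' # rest) ups c"
        using less.prems L la by (auto simp: pwf_def R_def kwf_kp')
      have d1: "decomp F n m r k (pcell F n m r k fnm (FAnd fK R) fD (a # rest) ups c)"
        by (rule less.IH[OF _ refl wf1]) (use less.prems L in auto)
      have d2: "decomp F n m r k (pcell F n m r k fnm (FAnd fK (FNot R)) fD (a' # rest) ups c)"
        by (rule less.IH[OF _ refl wf2]) (use less.prems L in auto)
      have eq: "pcell F n m r k fnm fK fD lows ups c =
         pcell F n m r k fnm (FAnd fK R) fD (a # rest) ups c \<union> pcell F n m r k fnm (FAnd fK (FNot R)) fD (a' # rest) ups c"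
        unfolding pcell_def L R_def using la
        by (auto simp: keval_kp' intro: lows_1 lows_2)
      have dj: "pcell F n m r k fnm (FAnd fK R) fD (a # rest) ups c \<inter> pcell F n m r k fnm (FAnd fK (FNot R)) fD (a' # rest) ups c = {}"
        unfolding pcell_def by auto
      show ?thesis unfolding eq by (rule decomp_Un[OF d1 d2 dj])
    next
      case U
      define R where "R = FDivK (kp a) (kp a')"
      have la: "linpoly F k a" "linpoly F k a'" using less.prems U by (auto simp: pwf_def)
      have wf1: "pwf F k fnm (FAnd fK R) fD lows (a # rest) c" and wf2: "pwf F k fnm (FAnd fK (FNot R)) fD lows (a' # rest) c"
        using less.prems U la by (auto simp: pwf_def R_def kwf_kp')
      have d1: "decomp F n m r k (pcell F n m r k fnm (FAnd fK R) fD lows (a # rest) c)"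
        by (rule less.IH[OF _ refl wf1]) (use less.prems U in auto)
      have d2: "decomp F n m r k (pcell F n m r k fnm (FAnd fK (FNot R)) fD lows (a' # rest) c)"
        by (rule less.IH[OF _ refl wf2]) (use less.prems U in auto)
      have eq: "pcell F n m r k fnm fK fD lows ups c =
         pcell F n m r k fnm (FAnd fK R) fD lows (a # rest) c \<union> pcell F n m r k fnm (FAnd fK (FNot R)) fD lows (a' # rest) c"
        unfolding pcell_def U R_def using la
        by (auto simp: keval_kp' intro: ups_1 ups_2)
      have dj: "pcell F n m r k fnm (FAnd fK R) fD lows (a # rest) c \<inter> pcell F n m r k fnm (FAnd fK (FNot R)) fD lows (a' # rest) c = {}"
        unfolding pcell_def by auto
      show ?thesis unfolding eq by (rule decomp_Un[OF d1 d2 dj])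
    qed
  qed
qed

lemma pcell_decomp: "pwf F k fnm fK fD lows ups c \<Longrightarrow> decomp F n m r k (pcell F n m r k fnm fK fD lows ups c)"
  using merge_aux by blast

lemma cell_pcell: assumes "is_cell F n m r k C"
  shows "\<exists>fnm fK fD lows ups c. pwf F k fnm fK fD lows ups c \<and> C = pcell F n m r k fnm fK fD lows ups c"
proof -
  obtain Dnm DK D a1 a2 c b1 b2 where
    h: "definable F n m r 0 Dnm" "definable F n m 0 k DK" "definable F n m (Suc r) k D"
       "linpoly F k a1" "linpoly F k a2" "linpoly F k c"
       "C = {(ls, xs, t). (ls, []) \<in> Dnm \<and> ([], xs) \<in> DK \<and>
              box F b1 (peval a1 xs) (t - peval c xs) \<and>
              box F b2 (t - peval c xs) (peval a2 xs) \<and>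
              (ls @ [rho F n m (t - peval c xs)], xs) \<in> D}"
    using assms unfolding is_cell_def by blast
  obtain fnm where fnm: "fwf (Ppi F) fnm" "Dnm = {(ls, xs). length ls = r \<and> length xs = 0 \<and> set ls \<subseteq> Lam F n m \<and>
                     sat F (envL n m ls) (envK xs) fnm}" using h(1) unfolding definable_def by blast
  obtain fK where fK: "fwf (Ppi F) fK" "DK = {(ls, xs). length ls = 0 \<and> length xs = k \<and> set ls \<subseteq> Lam F n m \<and>
                     sat F (envL n m ls) (envK xs) fK}" using h(2) unfolding definable_def by blast
  obtain fD where fD: "fwf (Ppi F) fD" "D = {(ls, xs). length ls = Suc r \<and> length xs = k \<and> set ls \<subseteq> Lam F n m \<and>
                     sat F (envL n m ls) (envK xs) fD}" using h(3) unfolding definable_def by blast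
  define lows where "lows = (if b1 then [a1] else [])"
  define ups where "ups = (if b2 then [a2] else [])"
  have "pwf F k fnm fK fD lows ups c" using fnm fK fD h by (auto simp: pwf_def lows_def ups_def)
  moreover have "C = pcell F n m r k fnm fK fD lows ups c"
    unfolding h(7) pcell_def fnm fK fD lows_def ups_def box_def by auto
  ultimately show ?thesis by blast
qed

lemma decomp_UN: "finite I \<Longrightarrow> (\<forall>i\<in>I. decomp F n m r k (f i)) \<Longrightarrow>
   (\<forall>i\<in>I. \<forall>j\<in>I. i \<noteq> j \<longrightarrow> f i \<inter> f j = {}) \<Longrightarrow> decomp F n m r k (\<Union>i\<in>I. f i)"
proof (induction I rule: finite_induct)
  case empty then show ?case by (simp add: decomp_empty)
next
  case (insert x I)
  have "(\<Union>i\<in>insert x I. f i) = f x \<union> (\<Union>i\<in>I. f i)" by simp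
  moreover have "f x \<inter> (\<Union>i\<in>I. f i) = {}"
  proof -
    have "\<forall>j\<in>I. f x \<inter> f j = {}" using insert.prems(2) insert.hyps(2) by auto
    then show ?thesis by blast
  qed
  moreover have "decomp F n m r k (\<Union>i\<in>I. f i)" using insert by simp
  ultimately show ?case using insert.prems(1) decomp_Un by (metis insert_iff)
qed



context zfl begin

lemma Z1: "a < b \<Longrightarrow> a + one \<le> b"
  using one_least[of "b - a"] by (simp add: le_diff_eq add.commute)

lemma Z2: "a \<le> g \<Longrightarrow> g \<le> a + nsm N one \<Longrightarrow> \<exists>i\<le>N. g = a + nsm i one"
proof (induction N)
  case 0 then show ?case by simp
next
  case (Suc N)
  show ?case
  proof (cases "g = a + nsm (Suc N) one")
    case True then show ?thesis by blast
  next
    case False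
    then have "g < a + nsm (Suc N) one" using Suc.prems by simp
    then have "g + one \<le> a + nsm (Suc N) one" by (rule Z1)
    then have "g \<le> a + nsm N one" by (simp add: algebra_simps)
    then obtain i where "i \<le> N" "g = a + nsm i one" using Suc.IH Suc.prems(1) by blast
    then show ?thesis by (intro exI[of _ i]) auto
  qed
qed

lemma FCong_sem: assumes "leval F eL eK X = rho F n m x" "x \<noteq> 0" "g < n"
  shows "sat F eL eK (FCong n m g X) \<longleftrightarrow> gamma F n x = g"
  using assms rho_nz gamma_pick by (simp add: Let_def)

lemma FDisj_gamma: assumes "leval F eL eK X = rho F n m x" "x \<noteq> 0"
  shows "(\<exists>a\<in>set (map (\<lambda>g. FAnd (FCong n m g X) (P g)) [0..<n]). sat F eL eK a) \<longleftrightarrow>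
         sat F eL eK (P (gamma F n x))"
proof -
  have gl: "gamma F n x < n" using gamma_spec by blast
  show ?thesis using FCong_sem[OF assms] gl by auto
qed

lemma NC_sem: assumes "u \<noteq> 0" "d \<noteq> 0" "ord u = ord d"
  shows "ladd F n m 0 (rho F n m u) (rho F n m d) \<noteq> {0} \<longleftrightarrow> (u + d \<noteq> 0 \<and> ord (u+d) \<le> ord d)"
proof
  assume h: "ladd F n m 0 (rho F n m u) (rho F n m d) \<noteq> {0}"
  then have "inD F n m (+) (rho F n m u) (rho F n m d)"
    using rho_nz assms unfolding ladd_def by (auto split: if_splits)
  then have "u + d \<noteq> 0 \<and> ord (u+d) = ord u" unfolding inD_def using assms by blast
  then show "u + d \<noteq> 0 \<and> ord (u+d) \<le> ord d" using assms by simp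
next
  assume h: "u + d \<noteq> 0 \<and> ord (u+d) \<le> ord d"
  have g: "(gamma F n u + 0) div n = 0" using gamma_spec by simp
  have "ladd F n m ((gamma F n u + 0) div n) (rho F n m u) (rho F n m d) = rho F n m (u+d)"
    by (rule ladd_lemma) (use assms h in auto)
  then show "ladd F n m 0 (rho F n m u) (rho F n m d) \<noteq> {0}" using g h rho_nz by simp
qed

end

locale two = zfl F n m for F :: "('a::field, 'g::linordered_ab_group_add) zfield" and n m +
  fixes r k :: nat
    and fnm1 fK1 fD1 :: "'a fm" and L1 U1 :: "('a list \<times> 'a) list" and c1 :: "'a list \<times> 'a"
    and fnm2 fK2 fD2 :: "'a fm" and L2 U2 :: "('a list \<times> 'a) list" and c2 :: "'a list \<times> 'a"
  assumes wf1: "pwf F k fnm1 fK1 fD1 L1 U1 c1" and wf2: "pwf F k fnm2 fK2 fD2 L2 U2 c2"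
begin

definition "dd = pdiff c1 c2"
definition "q i = pscal (inverse pi ^ m * pi ^ i) dd"
definition "NN = Suc (r + fb fD2)"
definition "SUBf \<Psi> = FExL NN n m (FAnd (FEqL (LVar NN n m) (LVar r n m))
                      (FExL r n m (FAnd (FEqL (LVar r n m) \<Psi>) fD2)))"
definition "dk = kp dd"
definition "rd = LRho n m dk"
definition "lN = LVar NN n m"
definition "lr = LVar r n m"
definition "fnm = FAnd fnm1 fnm2"
definition "fK = FAnd fK1 fK2"
definition "DZ = FEqK dk (KConst 0)"
definition "BD2 = FConj (map (\<lambda>a. FNot (FDivK dk (kp a))) L2 @ map (\<lambda>a. FNot (FDivK (kp a) dk)) U2)"
definition "NC = FNot (FEqL (LAdd n m 0 lr rd) (LRho n m (KConst 0)))"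
definition "OFF1 jj = FDisj (map (\<lambda>g. FAnd (FCong n m g lr) (SUBf (LAdd n m ((g + jj) div n) lN rd))) [0..<n])"
definition "OFF2 jj = FDisj (map (\<lambda>g. FAnd (FCong n m g rd) (SUBf (LAdd n m ((g + jj) div n) rd lN))) [0..<n])"

definition "C1 = pcell F n m r k fnm1 fK1 fD1 L1 U1 c1"
definition "C2 = pcell F n m r k fnm2 fK2 fD2 L2 U2 c2"
definition "T st = {(ls, xs, t). (ls, xs, t) \<in> C1 \<and> (ls, xs, t) \<in> C2 \<and>
   (if st then vlt F (t - peval c2 xs) (t - peval c1 xs) else vdiv F (t - peval c2 xs) (t - peval c1 xs))}"

lemma lp: "linpoly F k c1" "linpoly F k c2" "linpoly F k dd"
  using wf1 wf2 by (auto simp: pwf_def dd_def intro: linpoly_pdiff)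

lemma Ppi_coef: "inverse pi ^ m * pi ^ i \<in> Ppi F"
  by (intro Ppi_mult Ppi_pow Ppi_inv Ppi_pi)

lemma lpq: "linpoly F k (q i)" unfolding q_def by (rule linpoly_pscal[OF lp(3) Ppi_coef])

lemma peval_dd: "length xs = k \<Longrightarrow> peval dd xs = peval c1 xs - peval c2 xs"
  using lp unfolding dd_def linpoly_def by (simp add: peval_pdiff)

lemma keval_dk: "length xs = k \<Longrightarrow> keval (envK xs) dk = peval c1 xs - peval c2 xs"
  unfolding dk_def using keval_kp'[OF lp(3)] peval_dd by simp

lemma peval_q: "peval (q i) xs = inverse pi ^ m * pi ^ i * peval dd xs"
  unfolding q_def by (simp add: peval_pscal)

lemma ord_q: assumes "D \<noteq> 0" shows "ord (inverse pi ^ m * pi ^ i * D) = ord D + nsm i one - nsm m one"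
  using assms by (simp add: ord_mult ord_pow ord_inverse ord_pi nsm_minus)

lemma vlt_q_lo: "vlt F (inverse pi ^ m * pi ^ i * D) u \<longleftrightarrow> D \<noteq> 0 \<and> (u = 0 \<or> ord D + nsm i one - nsm m one < ord u)"
  by (cases "D = 0") (auto simp: vlt_def ord_q)
lemma vlt_q_up: "vlt F u (inverse pi ^ m * pi ^ i * D) \<longleftrightarrow> u \<noteq> 0 \<and> (D = 0 \<or> ord u < ord D + nsm i one - nsm m one)"
  by (cases "D = 0") (auto simp: vlt_def ord_q)

lemma NN_gt: "r < NN" "fb fD2 < NN" by (auto simp: NN_def)

lemma SUB_sem: assumes "length ls = r"
  and "\<And>A'. leval F (((envL n m (ls @ [lam]))((NN,n,m) := lam))((r,n,m) := A')) eK \<Psi> = V"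
  and "lam \<in> Lam F n m" "V \<in> Lam F n m"
  shows "sat F (envL n m (ls @ [lam])) eK (SUBf \<Psi>) \<longleftrightarrow> sat F (envL n m (ls @ [V])) eK fD2"
proof -
  define e where "e = envL n m (ls @ [lam])"
  have er: "e (r,n,m) = lam" using assms(1) by (simp add: e_def envL_def nth_append)
  have neq: "(NN,n,m) \<noteq> (r,n,m)" using NN_gt by simp
  have co: "sat F ((e((NN,n,m) := lam))((r,n,m) := V)) eK fD2 = sat F (e((r,n,m) := V)) eK fD2"
    by (rule sat_coinc) (use NN_gt in auto)
  have "e((r,n,m) := V) = envL n m (ls @ [V])" unfolding e_def using envL_snoc[OF assms(1)] by simp
  then show ?thesis unfolding SUBf_def e_def[symmetric]
    using er neq assms(2-4) co unfolding e_def by auto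
qed

end


context two begin

lemma fwf_SUBf: "lsort (Ppi F) \<Psi> = Some (n, m) \<Longrightarrow> fwf (Ppi F) (SUBf \<Psi>)"
  using wf2 n1 m1 by (simp add: SUBf_def pwf_def)

lemma kwf_dk: "kwf (Ppi F) dk" unfolding dk_def by (rule kwf_kp'[OF lp(3)])
lemma lsort_rd: "lsort (Ppi F) rd = Some (n,m)" using kwf_dk n1 m1 by (simp add: rd_def)
lemma lsort_lr: "lsort (Ppi F) lr = Some (n,m)" using n1 m1 by (simp add: lr_def)
lemma lsort_lN: "lsort (Ppi F) lN = Some (n,m)" using n1 m1 by (simp add: lN_def)

lemma mem_T: "(ls, xs, t) \<in> T st \<longleftrightarrow> (ls, xs, t) \<in> C1 \<and> (ls, xs, t) \<in> C2 \<and>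
   (if st then vlt F (t - peval c2 xs) (t - peval c1 xs) else vdiv F (t - peval c2 xs) (t - peval c1 xs))"
  by (simp add: T_def)

lemma sat_DZ: "length xs = k \<Longrightarrow> sat F eL (envK xs) DZ \<longleftrightarrow> peval c1 xs - peval c2 xs = 0"
  by (simp add: DZ_def keval_dk)

lemma piece_i: "{p \<in> T st. case p of (ls, xs, t) \<Rightarrow> peval c1 xs - peval c2 xs = 0} =
  (if st then {} else pcell F n m r k fnm (FAnd fK DZ) (FAnd fD1 fD2) (L1 @ L2) (U1 @ U2) c1)"
proof (rule set_eqI)
  fix p :: "'a set list \<times> 'a list \<times> 'a"
  obtain ls xs t where p: "p = (ls, xs, t)" by (cases p) auto
  show "p \<in> {p \<in> T st. case p of (ls, xs, t) \<Rightarrow> peval c1 xs - peval c2 xs = 0} \<longleftrightarrow>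
    p \<in> (if st then {} else pcell F n m r k fnm (FAnd fK DZ) (FAnd fD1 fD2) (L1 @ L2) (U1 @ U2) c1)"
  proof (cases "length xs = k \<and> peval c1 xs = peval c2 xs")
    case True
    then show ?thesis unfolding p using sat_DZ[of xs]
      by (auto simp: mem_T C1_def C2_def pcell_def fnm_def fK_def vlt_def vdiv_def)
  next
    case False
    then show ?thesis unfolding p using sat_DZ[of xs]
      by (auto simp: mem_T C1_def C2_def pcell_def fnm_def fK_def)
  qed
qed


lemma vlt_transfer: assumes "x \<noteq> 0" "y \<noteq> 0" "ord x = ord y"
  shows "vlt F a x \<longleftrightarrow> vlt F a y" "vlt F x a \<longleftrightarrow> vlt F y a"
  using assms by (auto simp: vlt_def)

lemma vlt_vdiv: "vlt F x y \<longleftrightarrow> \<not> vdiv F y x" by (auto simp: vlt_def vdiv_def)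

lemma sat_BD2: "length xs = k \<Longrightarrow> sat F eL (envK xs) BD2 \<longleftrightarrow>
   (\<forall>a\<in>set L2. vlt F (peval a xs) (peval c1 xs - peval c2 xs)) \<and> (\<forall>a\<in>set U2. vlt F (peval c1 xs - peval c2 xs) (peval a xs))"
proof -
  assume len: "length xs = k"
  have k1: "\<forall>a\<in>set L2. keval (envK xs) (kp a) = peval a xs" and k2: "\<forall>a\<in>set U2. keval (envK xs) (kp a) = peval a xs"
    using wf2 len by (auto simp: pwf_def keval_kp')
  have "sat F eL (envK xs) BD2 \<longleftrightarrow> (\<forall>a\<in>set L2. \<not> vdiv F (keval (envK xs) dk) (keval (envK xs) (kp a))) \<and>
     (\<forall>a\<in>set U2. \<not> vdiv F (keval (envK xs) (kp a)) (keval (envK xs) dk))"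
    by (simp add: BD2_def ball_Un)
  also have "\<dots> \<longleftrightarrow> (\<forall>a\<in>set L2. vlt F (peval a xs) (peval c1 xs - peval c2 xs)) \<and> (\<forall>a\<in>set U2. vlt F (peval c1 xs - peval c2 xs) (peval a xs))"
    using k1 k2 by (auto simp: keval_dk len vlt_vdiv)
  finally show ?thesis .
qed

lemma ladd_Lam: "A \<in> Lam F n m \<Longrightarrow> B \<in> Lam F n m \<Longrightarrow> ladd F n m j A B \<in> Lam F n m"
  unfolding ladd_def using rho_Lam[of F n m 0] by (auto simp: rho_0)

lemma sat_OFF1: assumes "length ls = r" "length xs = k" "u \<noteq> 0"
  shows "sat F (envL n m (ls @ [rho F n m u])) (envK xs) (OFF1 jj) \<longleftrightarrow>
    sat F (envL n m (ls @ [ladd F n m ((gamma F n u + jj) div n) (rho F n m u) (rho F n m (peval c1 xs - peval c2 xs))])) (envK xs) fD2"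
proof -
  have lr: "leval F (envL n m (ls @ [rho F n m u])) (envK xs) lr = rho F n m u"
    using assms(1) by (simp add: lr_def envL_def nth_append)
  have "sat F (envL n m (ls @ [rho F n m u])) (envK xs) (OFF1 jj) \<longleftrightarrow>
     sat F (envL n m (ls @ [rho F n m u])) (envK xs) (SUBf (LAdd n m ((gamma F n u + jj) div n) lN rd))"
    unfolding OFF1_def sat_FDisj by (rule FDisj_gamma[OF lr assms(3)])
  also have "\<dots> \<longleftrightarrow> sat F (envL n m (ls @ [ladd F n m ((gamma F n u + jj) div n) (rho F n m u) (rho F n m (peval c1 xs - peval c2 xs))])) (envK xs) fD2"
    by (rule SUB_sem[OF assms(1)]) (use NN_gt assms in \<open>auto simp: lN_def rd_def keval_dk intro: ladd_Lam\<close>)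
  finally show ?thesis .
qed

lemma sat_OFF2: assumes "length ls = r" "length xs = k" "peval c1 xs - peval c2 xs \<noteq> 0"
  shows "sat F (envL n m (ls @ [rho F n m u])) (envK xs) (OFF2 jj) \<longleftrightarrow>
    sat F (envL n m (ls @ [ladd F n m ((gamma F n (peval c1 xs - peval c2 xs) + jj) div n) (rho F n m (peval c1 xs - peval c2 xs)) (rho F n m u)])) (envK xs) fD2"
proof -
  have rd: "leval F (envL n m (ls @ [rho F n m u])) (envK xs) rd = rho F n m (peval c1 xs - peval c2 xs)"
    using assms by (simp add: rd_def keval_dk)
  have "sat F (envL n m (ls @ [rho F n m u])) (envK xs) (OFF2 jj) \<longleftrightarrow>
     sat F (envL n m (ls @ [rho F n m u])) (envK xs) (SUBf (LAdd n m ((gamma F n (peval c1 xs - peval c2 xs) + jj) div n) rd lN))"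
    unfolding OFF2_def sat_FDisj by (rule FDisj_gamma[OF rd assms(3)])
  also have "\<dots> \<longleftrightarrow> sat F (envL n m (ls @ [ladd F n m ((gamma F n (peval c1 xs - peval c2 xs) + jj) div n) (rho F n m (peval c1 xs - peval c2 xs)) (rho F n m u)])) (envK xs) fD2"
    by (rule SUB_sem[OF assms(1)]) (use NN_gt assms in \<open>auto simp: lN_def rd_def keval_dk intro: ladd_Lam\<close>)
  finally show ?thesis .
qed

lemma sat_SUBrd: assumes "length ls = r" "length xs = k"
  shows "sat F (envL n m (ls @ [rho F n m u])) (envK xs) (SUBf rd) \<longleftrightarrow>
    sat F (envL n m (ls @ [rho F n m (peval c1 xs - peval c2 xs)])) (envK xs) fD2"
  by (rule SUB_sem[OF assms(1)]) (use assms in \<open>auto simp: rd_def keval_dk\<close>)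

lemma sat_NC: assumes "length ls = r" "length xs = k"
  shows "sat F (envL n m (ls @ [rho F n m u])) (envK xs) NC \<longleftrightarrow>
    ladd F n m 0 (rho F n m u) (rho F n m (peval c1 xs - peval c2 xs)) \<noteq> {0}"
  using assms by (simp add: NC_def lr_def rd_def keval_dk envL_def nth_append rho_0)



lemma close_lem: assumes "u \<noteq> 0" "D \<noteq> 0" "ord u < ord D + nsm 1 one - nsm m one"
  shows "u + D \<noteq> 0 \<and> ord (u+D) = ord u \<and> rho F n m (u+D) = rho F n m u"
proof -
  have "ord u + one \<le> ord D + nsm 1 one - nsm m one" using Z1[OF assms(3)] .
  then have "ord u + nsm m one \<le> ord D" by (simp add: algebra_simps)
  then have "D = 0 \<or> ord u + nsm m one \<le> ord D" by simp
  from perturb[OF assms(1) this] show ?thesis by (simp add: rho_eq_iff lsim_sym)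
qed

lemma nsm_2m: "nsm (2*m-1) one - nsm m one = nsm (m-1) one"
proof -
  have "2*m - 1 = (m-1) + m" using m1 by simp
  then show ?thesis by (simp add: nsm_add)
qed

lemma nsm_m: "nsm m one = nsm (m-1) one + one"
  using m1 nsm.simps(2)[of "m-1" one] by (simp add: add.commute)

lemma far_lem: assumes "D \<noteq> 0" "u = 0 \<or> ord D + nsm (2*m-1) one - nsm m one < ord u"
  shows "u + D \<noteq> 0 \<and> ord (u+D) = ord D \<and> rho F n m (u+D) = rho F n m D \<and> (u = 0 \<or> ord D < ord u) \<and>
    \<not> (u \<noteq> 0 \<and> ord u < ord D + nsm 1 one - nsm m one)"
proof -
  have eq: "ord D + nsm (2*m-1) one - nsm m one = ord D + nsm (m-1) one"
    using nsm_2m by (metis add_diff_eq)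
  have h0: "u = 0 \<or> ord D + nsm (m-1) one < ord u" using assms(2) unfolding eq .
  have h: "u = 0 \<or> ord D + nsm m one \<le> ord u"
    using h0 Z1[of "ord D + nsm (m-1) one" "ord u"] nsm_m by (auto simp: add.assoc)
  from perturb[OF assms(1) h] have p: "D + u \<noteq> 0" "ord (D+u) = ord D" "lsim F n m D (D+u)" by auto
  have "ord D < ord D + nsm m one" using nsm_m_pos by simp
  then have lt: "u = 0 \<or> ord D < ord u" using h by (meson order.strict_trans2)
  have "nsm 1 one \<le> nsm m one" using nsm_mono_n[of 1 m one] m1 one_pos by simp
  then have X: "ord D + nsm 1 one - nsm m one \<le> ord D" by (simp add: algebra_simps)
  have "\<not> (u \<noteq> 0 \<and> ord u < ord D + nsm 1 one - nsm m one)"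
  proof
    assume a: "u \<noteq> 0 \<and> ord u < ord D + nsm 1 one - nsm m one"
    then have "ord u < ord D" using X by (meson less_le_trans)
    with lt a show False by auto
  qed
  then show ?thesis using p lt by (simp add: add.commute rho_eq_iff lsim_sym)
qed

lemma mid_bounds: assumes "D \<noteq> 0" "1 \<le> i"
  shows "(D \<noteq> 0 \<and> (u = 0 \<or> ord D + nsm (i-1) one - nsm m one < ord u)) \<and> (u \<noteq> 0 \<and> (D = 0 \<or> ord u < ord D + nsm (i+1) one - nsm m one))
     \<longleftrightarrow> u \<noteq> 0 \<and> ord u = ord D + nsm i one - nsm m one"
proof -
  have e1: "nsm i one = nsm (i-1) one + one" using assms(2) nsm.simps(2)[of "i-1" one] by (simp add: add.commute)
  have e2: "nsm (i+1) one = nsm i one + one" by (simp add: add.commute)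
  show ?thesis
  proof
    assume h: "(D \<noteq> 0 \<and> (u = 0 \<or> ord D + nsm (i-1) one - nsm m one < ord u)) \<and> (u \<noteq> 0 \<and> (D = 0 \<or> ord u < ord D + nsm (i+1) one - nsm m one))"
    then have a: "ord D + nsm (i-1) one - nsm m one < ord u" "ord u < ord D + nsm (i+1) one - nsm m one" "u \<noteq> 0" using assms by auto
    from Z1[OF a(1)] have "ord D + nsm i one - nsm m one \<le> ord u" by (simp add: e1 algebra_simps)
    moreover from Z1[OF a(2)] have "ord u \<le> ord D + nsm i one - nsm m one" by (simp add: e2 algebra_simps)
    ultimately show "u \<noteq> 0 \<and> ord u = ord D + nsm i one - nsm m one" using a by simp
  next
    assume "u \<noteq> 0 \<and> ord u = ord D + nsm i one - nsm m one"
    then show "(D \<noteq> 0 \<and> (u = 0 \<or> ord D + nsm (i-1) one - nsm m one < ord u)) \<and> (u \<noteq> 0 \<and> (D = 0 \<or> ord u < ord D + nsm (i+1) one - nsm m one))"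
      using assms one_pos by (simp add: e1 e2 algebra_simps)
  qed
qed

lemma mid_lt: assumes "i < m" "D \<noteq> 0" "u \<noteq> 0" "ord u = ord D + nsm i one - nsm m one"
  shows "u + D \<noteq> 0 \<and> ord (u+D) = ord u \<and>
    rho F n m (u+D) = ladd F n m ((gamma F n u + (m-i)) div n) (rho F n m u) (rho F n m D)"
proof -
  have "nsm m one = nsm i one + nsm (m-i) one" using assms(1) nsm_add[of i "m-i" one] by simp
  then have oD: "ord D = ord u + nsm (m-i) one" using assms(4) by (simp add: algebra_simps)
  have "0 < nsm (m-i) one" using nsm_pos[OF one_pos] assms(1) by simp
  then have "ord u < ord D" using oD by simp
  from ultra_strict[OF assms(3)] this have us: "u + D \<noteq> 0" "ord (u+D) = ord u" by auto
  have "ladd F n m ((gamma F n u + (m-i)) div n) (rho F n m u) (rho F n m D) = rho F n m (u+D)"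
    by (rule ladd_lemma[OF assms(3,2) oD us(1)]) (use us \<open>ord u < ord D\<close> in simp)
  then show ?thesis using us by simp
qed

lemma mid_gt: assumes "m < i" "D \<noteq> 0" "u \<noteq> 0" "ord u = ord D + nsm i one - nsm m one"
  shows "u + D \<noteq> 0 \<and> ord (u+D) = ord D \<and> ord D < ord u \<and>
    rho F n m (u+D) = ladd F n m ((gamma F n D + (i-m)) div n) (rho F n m D) (rho F n m u)"
proof -
  have "nsm i one = nsm m one + nsm (i-m) one" using assms(1) nsm_add[of m "i-m" one] by simp
  then have oD: "ord u = ord D + nsm (i-m) one" using assms(4) by (simp add: algebra_simps)
  have "0 < nsm (i-m) one" using nsm_pos[OF one_pos] assms(1) by simp
  then have lt: "ord D < ord u" using oD by simp
  from ultra_strict[OF assms(2)] lt have us: "D + u \<noteq> 0" "ord (D+u) = ord D" by auto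
  have "ladd F n m ((gamma F n D + (i-m)) div n) (rho F n m D) (rho F n m u) = rho F n m (D+u)"
    by (rule ladd_lemma[OF assms(2,3) oD us(1)]) (use us lt in simp)
  then show ?thesis using us lt by (simp add: add.commute)
qed

end


context two begin

lemma piece_ii: "{p \<in> T st. case p of (ls, xs, t) \<Rightarrow> \<not> peval c1 xs - peval c2 xs = 0 \<and> vlt F (t - peval c1 xs) (peval (q 1) xs)} =
  (if st then {} else pcell F n m r k fnm (FAnd fK (FNot DZ)) (FAnd fD1 fD2) (L1 @ L2) (U1 @ U2 @ [q 1]) c1)"
proof (rule set_eqI)
  fix p :: "'a set list \<times> 'a list \<times> 'a"
  obtain ls xs t where p: "p = (ls, xs, t)" by (cases p) auto
  show "p \<in> {p \<in> T st. case p of (ls, xs, t) \<Rightarrow> \<not> peval c1 xs - peval c2 xs = 0 \<and> vlt F (t - peval c1 xs) (peval (q 1) xs)} \<longleftrightarrow>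
    p \<in> (if st then {} else pcell F n m r k fnm (FAnd fK (FNot DZ)) (FAnd fD1 fD2) (L1 @ L2) (U1 @ U2 @ [q 1]) c1)"
  proof (cases "length xs = k \<and> peval c1 xs - peval c2 xs \<noteq> 0 \<and> vlt F (t - peval c1 xs) (peval (q 1) xs)")
    case False
    then show ?thesis unfolding p using sat_DZ[of xs]
      by (auto simp: mem_T C1_def C2_def pcell_def fnm_def fK_def)
  next
    case True
    define u where "u = t - peval c1 xs"
    define D where "D = peval c1 xs - peval c2 xs"
    have s: "t - peval c2 xs = u + D" by (simp add: u_def D_def)
    have Dnz': "peval c1 xs \<noteq> peval c2 xs" using True by simp
    have len: "length xs = k" and Dnz: "D \<noteq> 0" and v: "vlt F u (inverse pi ^ m * pi ^ 1 * D)"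
      using True peval_q peval_dd by (auto simp: D_def u_def)
    have uu: "u \<noteq> 0" "ord u < ord D + nsm 1 one - nsm m one" using v vlt_q_up[of u 1 D] Dnz by auto
    from close_lem[OF uu(1) Dnz uu(2)] have c: "u + D \<noteq> 0" "ord (u+D) = ord u" "rho F n m (u+D) = rho F n m u" by auto
    have tr: "\<And>a. vlt F a (u+D) = vlt F a u" "\<And>a. vlt F (u+D) a = vlt F u a"
      using vlt_transfer[OF c(1) uu(1) c(2)] by auto
    have reg: "vdiv F (u+D) u" "\<not> vlt F (u+D) u" using c uu by (auto simp: vdiv_def vlt_def)
    have q1: "vlt F u (peval (q 1) xs)" using True by (simp add: u_def)
    show ?thesis unfolding p using len Dnz Dnz' reg q1 sat_DZ[of xs]
      by (auto simp: mem_T C1_def C2_def pcell_def fnm_def fK_def u_def[symmetric] D_def[symmetric] s tr c)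
  qed
qed

lemma piece_vi: "{p \<in> T st. case p of (ls, xs, t) \<Rightarrow> \<not> peval c1 xs - peval c2 xs = 0 \<and> \<not> vlt F (t - peval c1 xs) (peval (q 1) xs)
     \<and> vlt F (peval (q (2*m-1)) xs) (t - peval c1 xs)} =
  pcell F n m r k fnm (FAnd fK (FAnd (FNot DZ) BD2)) (FAnd fD1 (SUBf rd)) (L1 @ [q (2*m-1)]) U1 c1"
proof (rule set_eqI)
  fix p :: "'a set list \<times> 'a list \<times> 'a"
  obtain ls xs t where p: "p = (ls, xs, t)" by (cases p) auto
  show "p \<in> {p \<in> T st. case p of (ls, xs, t) \<Rightarrow> \<not> peval c1 xs - peval c2 xs = 0 \<and> \<not> vlt F (t - peval c1 xs) (peval (q 1) xs)
     \<and> vlt F (peval (q (2*m-1)) xs) (t - peval c1 xs)} \<longleftrightarrow>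
    p \<in> pcell F n m r k fnm (FAnd fK (FAnd (FNot DZ) BD2)) (FAnd fD1 (SUBf rd)) (L1 @ [q (2*m-1)]) U1 c1"
  proof (cases "length xs = k \<and> length ls = r \<and> peval c1 xs - peval c2 xs \<noteq> 0 \<and> vlt F (peval (q (2*m-1)) xs) (t - peval c1 xs)")
    case False
    then show ?thesis unfolding p using sat_DZ[of xs]
      by (auto simp: mem_T C1_def C2_def pcell_def fnm_def fK_def)
  next
    case True
    define u where "u = t - peval c1 xs"
    define D where "D = peval c1 xs - peval c2 xs"
    have s: "t - peval c2 xs = u + D" by (simp add: u_def D_def)
    have Dnz': "peval c1 xs \<noteq> peval c2 xs" using True by simp
    have len: "length xs = k" "length ls = r" and Dnz: "D \<noteq> 0" and v: "vlt F (inverse pi ^ m * pi ^ (2*m-1) * D) u"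
      using True peval_q peval_dd by (auto simp: D_def u_def)
    then have uu: "u = 0 \<or> ord D + nsm (2*m-1) one - nsm m one < ord u" by (auto simp: vlt_q_lo)
    from far_lem[OF Dnz uu] have c: "u + D \<noteq> 0" "ord (u+D) = ord D" "rho F n m (u+D) = rho F n m D"
      "u = 0 \<or> ord D < ord u" "\<not> (u \<noteq> 0 \<and> ord u < ord D + nsm 1 one - nsm m one)" by auto
    have tr: "\<And>a. vlt F a (u+D) = vlt F a D" "\<And>a. vlt F (u+D) a = vlt F D a"
      using vlt_transfer[OF c(1) Dnz c(2)] by auto
    have reg: "vdiv F (u+D) u" "vlt F (u+D) u" using c by (auto simp: vdiv_def vlt_def)
    have q1: "\<not> vlt F u (peval (q 1) xs)" using c(5) Dnz' vlt_q_up[of u 1 D] peval_q[of 1 xs] peval_dd[OF len(1)] by (simp add: D_def)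
    have q2: "vlt F (peval (q (2*m-1)) xs) u" using True by (simp add: u_def)
    have sub: "sat F (envL n m (ls @ [rho F n m u])) (envK xs) (SUBf rd) \<longleftrightarrow>
      sat F (envL n m (ls @ [rho F n m D])) (envK xs) fD2" using sat_SUBrd[OF len(2,1)] by (simp add: D_def)
    show ?thesis unfolding p using len Dnz Dnz' reg q1 q2 sat_DZ[of xs] sat_BD2[OF len(1)] sub
      by (auto simp: mem_T C1_def C2_def pcell_def fnm_def fK_def u_def[symmetric] D_def[symmetric] s tr c)
  qed
qed


definition "Mi st i = {p \<in> T st. case p of (ls, xs, t) \<Rightarrow> \<not> peval c1 xs - peval c2 xs = 0 \<and> \<not> vlt F (t - peval c1 xs) (peval (q 1) xs)
     \<and> \<not> vlt F (peval (q (2*m-1)) xs) (t - peval c1 xs) \<and> t - peval c1 xs \<noteq> 0 \<and>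
     ord (t - peval c1 xs) = ord (peval c1 xs - peval c2 xs) + nsm i one - nsm m one}"

lemma mem_pcell: "(ls, xs, t) \<in> pcell F n m r k a b c lows ups cc \<longleftrightarrow> length ls = r \<and> length xs = k \<and> set ls \<subseteq> Lam F n m \<and>
     sat F (envL n m ls) (envK []) a \<and> sat F (envL n m []) (envK xs) b \<and>
     (\<forall>x\<in>set lows. vlt F (peval x xs) (t - peval cc xs)) \<and>
     (\<forall>x\<in>set ups. vlt F (t - peval cc xs) (peval x xs)) \<and>
     sat F (envL n m (ls @ [rho F n m (t - peval cc xs)])) (envK xs) c"
  by (simp add: pcell_def)

lemma mem_Mi: "(ls, xs, t) \<in> Mi st i \<longleftrightarrow> (ls, xs, t) \<in> T st \<and> \<not> peval c1 xs - peval c2 xs = 0 \<and> \<not> vlt F (t - peval c1 xs) (peval (q 1) xs)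
     \<and> \<not> vlt F (peval (q (2*m-1)) xs) (t - peval c1 xs) \<and> t - peval c1 xs \<noteq> 0 \<and>
     ord (t - peval c1 xs) = ord (peval c1 xs - peval c2 xs) + nsm i one - nsm m one"
  by (simp add: Mi_def)

lemma qb: assumes "length xs = k" "D = peval c1 xs - peval c2 xs" "D \<noteq> 0" "1 \<le> i"
  shows "(vlt F (peval (q (i-1)) xs) u \<and> vlt F u (peval (q (i+1)) xs)) \<longleftrightarrow> u \<noteq> 0 \<and> ord u = ord D + nsm i one - nsm m one"
proof -
  have a: "peval (q (i-1)) xs = inverse pi ^ m * pi ^ (i-1) * D" using peval_q peval_dd assms by simp
  have b: "peval (q (i+1)) xs = inverse pi ^ m * pi ^ (i+1) * D" using peval_q peval_dd assms by simp
  have a': "vlt F (peval (q (i-1)) xs) u \<longleftrightarrow> D \<noteq> 0 \<and> (u = 0 \<or> ord D + nsm (i-1) one - nsm m one < ord u)"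
    unfolding a by (rule vlt_q_lo)
  have b': "vlt F u (peval (q (i+1)) xs) \<longleftrightarrow> u \<noteq> 0 \<and> (D = 0 \<or> ord u < ord D + nsm (i+1) one - nsm m one)"
    unfolding b by (rule vlt_q_up)
  show ?thesis unfolding a' b' by (rule mid_bounds[OF assms(3,4)])
qed

lemma qb2: assumes "length xs = k" "D = peval c1 xs - peval c2 xs" "D \<noteq> 0" "1 \<le> i" "i < 2*m"
  "u \<noteq> 0" "ord u = ord D + nsm i one - nsm m one"
  shows "\<not> vlt F u (peval (q 1) xs) \<and> \<not> vlt F (peval (q (2*m-1)) xs) u"
proof -
  have "nsm 1 one \<le> nsm i one" by (rule nsm_mono_n) (use assms one_pos in auto)
  moreover have "nsm i one \<le> nsm (2*m-1) one" by (rule nsm_mono_n) (use assms one_pos in auto)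
  ultimately have X: "\<not> ord u < ord D + nsm 1 one - nsm m one" "\<not> ord D + nsm (2*m-1) one - nsm m one < ord u"
    using assms(7) by (auto simp: algebra_simps)
  have a: "peval (q 1) xs = inverse pi ^ m * pi ^ 1 * D" using peval_q peval_dd assms by simp
  have b: "peval (q (2*m-1)) xs = inverse pi ^ m * pi ^ (2*m-1) * D" using peval_q peval_dd assms by simp
  have "\<not> vlt F u (peval (q 1) xs)" unfolding a vlt_q_up using X assms(3) by simp
  moreover have "\<not> vlt F (peval (q (2*m-1)) xs) u" unfolding b vlt_q_lo using X assms(6) by simp
  ultimately show ?thesis by simp
qed

lemma mid_lt_piece: assumes "1 \<le> i" "i < m"
  shows "Mi st i = (if st then {} else pcell F n m r k fnm (FAnd fK (FNot DZ)) (FAnd fD1 (OFF1 (m-i)))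
           (L1 @ L2 @ [q (i-1)]) (U1 @ U2 @ [q (i+1)]) c1)"
proof (rule set_eqI)
  fix p :: "'a set list \<times> 'a list \<times> 'a"
  obtain ls xs t where p: "p = (ls, xs, t)" by (cases p) auto
  show "p \<in> Mi st i \<longleftrightarrow> p \<in> (if st then {} else pcell F n m r k fnm (FAnd fK (FNot DZ)) (FAnd fD1 (OFF1 (m-i)))
           (L1 @ L2 @ [q (i-1)]) (U1 @ U2 @ [q (i+1)]) c1)"
  proof (cases "length xs = k \<and> length ls = r \<and> peval c1 xs - peval c2 xs \<noteq> 0")
    case False
    then show ?thesis unfolding p using sat_DZ[of xs]
      by (auto simp: mem_Mi mem_T C1_def C2_def mem_pcell fnm_def fK_def)
  next
    case True
    define u where "u = t - peval c1 xs"
    define D where "D = peval c1 xs - peval c2 xs"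
    have s: "t - peval c2 xs = u + D" by (simp add: u_def D_def)
    have Dnz': "peval c1 xs \<noteq> peval c2 xs" using True by simp
    have len: "length xs = k" "length ls = r" and Dnz: "D \<noteq> 0" using True by (auto simp: D_def)
    have qbi: "(vlt F (peval (q (i-1)) xs) u \<and> vlt F u (peval (q (i+1)) xs)) \<longleftrightarrow> u \<noteq> 0 \<and> ord u = ord D + nsm i one - nsm m one"
      by (rule qb[OF len(1) D_def Dnz]) (use assms in simp)
    show ?thesis
    proof (cases "u \<noteq> 0 \<and> ord u = ord D + nsm i one - nsm m one")
      case False
      then show ?thesis unfolding p using len Dnz Dnz' qbi sat_DZ[of xs]
        by (auto simp: mem_Mi mem_T C1_def C2_def mem_pcell fnm_def fK_def u_def[symmetric] D_def[symmetric])
    next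
      case True
      then have uu: "u \<noteq> 0" "ord u = ord D + nsm i one - nsm m one" by auto
      have qq: "vlt F (peval (q (i-1)) xs) u" "vlt F u (peval (q (i+1)) xs)" using qbi uu by auto
      have nr: "\<not> vlt F u (peval (q 1) xs)" "\<not> vlt F (peval (q (2*m-1)) xs) u"
        using qb2[OF len(1) D_def Dnz _ _ uu] assms by auto
      from mid_lt[OF assms(2) Dnz uu] have c: "u + D \<noteq> 0" "ord (u+D) = ord u"
        "rho F n m (u+D) = ladd F n m ((gamma F n u + (m-i)) div n) (rho F n m u) (rho F n m D)" by auto
      have tr: "\<And>a. vlt F a (u+D) = vlt F a u" "\<And>a. vlt F (u+D) a = vlt F u a"
        using vlt_transfer[OF c(1) uu(1) c(2)] by auto
      have reg: "vdiv F (u+D) u" "\<not> vlt F (u+D) u" using c uu by (auto simp: vdiv_def vlt_def)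
      have off: "sat F (envL n m (ls @ [rho F n m u])) (envK xs) (OFF1 (m-i)) \<longleftrightarrow>
          sat F (envL n m (ls @ [rho F n m (u+D)])) (envK xs) fD2"
        using sat_OFF1[OF len(2,1) uu(1)] c(3) by (simp add: D_def)
      show ?thesis unfolding p using len Dnz Dnz' reg qq nr off sat_DZ[of xs] uu
        by (auto simp: mem_Mi mem_T C1_def C2_def mem_pcell fnm_def fK_def u_def[symmetric] D_def[symmetric] s tr)
    qed
  qed
qed

lemma mid_eq_piece: assumes "i = m"
  shows "Mi st i = (if st then {} else pcell F n m r k fnm (FAnd fK (FNot DZ)) (FAnd fD1 (FAnd NC (OFF1 0)))
           (L1 @ L2 @ [q (i-1)]) (U1 @ U2 @ [q (i+1)]) c1)"
proof (rule set_eqI)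
  fix p :: "'a set list \<times> 'a list \<times> 'a"
  obtain ls xs t where p: "p = (ls, xs, t)" by (cases p) auto
  show "p \<in> Mi st i \<longleftrightarrow> p \<in> (if st then {} else pcell F n m r k fnm (FAnd fK (FNot DZ)) (FAnd fD1 (FAnd NC (OFF1 0)))
           (L1 @ L2 @ [q (i-1)]) (U1 @ U2 @ [q (i+1)]) c1)"
  proof (cases "length xs = k \<and> length ls = r \<and> peval c1 xs - peval c2 xs \<noteq> 0")
    case False
    then show ?thesis unfolding p using sat_DZ[of xs]
      by (auto simp: mem_Mi mem_T C1_def C2_def mem_pcell fnm_def fK_def)
  next
    case True
    define u where "u = t - peval c1 xs"
    define D where "D = peval c1 xs - peval c2 xs"
    have s: "t - peval c2 xs = u + D" by (simp add: u_def D_def)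
    have Dnz': "peval c1 xs \<noteq> peval c2 xs" using True by simp
    have len: "length xs = k" "length ls = r" and Dnz: "D \<noteq> 0" using True by (auto simp: D_def)
    have qbi: "(vlt F (peval (q (i-1)) xs) u \<and> vlt F u (peval (q (i+1)) xs)) \<longleftrightarrow> u \<noteq> 0 \<and> ord u = ord D + nsm i one - nsm m one"
      by (rule qb[OF len(1) D_def Dnz]) (use assms m1 in simp)
    show ?thesis
    proof (cases "u \<noteq> 0 \<and> ord u = ord D + nsm i one - nsm m one")
      case False
      then show ?thesis unfolding p using len Dnz Dnz' qbi sat_DZ[of xs]
        by (auto simp: mem_Mi mem_T C1_def C2_def mem_pcell fnm_def fK_def u_def[symmetric] D_def[symmetric])
    next
      case True
      then have uu: "u \<noteq> 0" "ord u = ord D + nsm i one - nsm m one" by auto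
      have qq: "vlt F (peval (q (i-1)) xs) u" "vlt F u (peval (q (i+1)) xs)" using qbi uu by auto
      have nr: "\<not> vlt F u (peval (q 1) xs)" "\<not> vlt F (peval (q (2*m-1)) xs) u"
        using qb2[OF len(1) D_def Dnz _ _ uu] assms m1 by auto
      have oe: "ord u = ord D" using uu assms by simp
      have nc: "sat F (envL n m (ls @ [rho F n m u])) (envK xs) NC \<longleftrightarrow> (u + D \<noteq> 0 \<and> ord (u+D) \<le> ord D)"
        using sat_NC[OF len(2,1)] NC_sem[OF uu(1) Dnz oe] by (simp add: D_def)
      have g0: "(gamma F n u + 0) div n = 0" using gamma_spec by simp
      have off: "u + D \<noteq> 0 \<and> ord (u+D) \<le> ord D \<Longrightarrow> (sat F (envL n m (ls @ [rho F n m u])) (envK xs) (OFF1 0) \<longleftrightarrow>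
          sat F (envL n m (ls @ [rho F n m (u+D)])) (envK xs) fD2)"
      proof -
        assume h: "u + D \<noteq> 0 \<and> ord (u+D) \<le> ord D"
        have "ladd F n m ((gamma F n u + 0) div n) (rho F n m u) (rho F n m D) = rho F n m (u+D)"
          by (rule ladd_lemma) (use uu Dnz oe h in auto)
        then show ?thesis using sat_OFF1[OF len(2,1) uu(1), of 0] g0 by (simp add: D_def)
      qed
      have ge: "u + D \<noteq> 0 \<Longrightarrow> ord u \<le> ord (u+D)" using ultra_le[OF uu(1) Dnz, of "ord u"] oe by simp
      have reg1: "vdiv F (u+D) u \<longleftrightarrow> (u + D \<noteq> 0 \<and> ord (u+D) \<le> ord D)" using uu oe by (auto simp: vdiv_def)
      have reg2: "\<not> vlt F (u+D) u" using ge uu by (auto simp: vlt_def)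
      have tr: "u + D \<noteq> 0 \<and> ord (u+D) \<le> ord D \<Longrightarrow> (\<forall>a. vlt F a (u+D) = vlt F a u) \<and> (\<forall>a. vlt F (u+D) a = vlt F u a)"
        using vlt_transfer[OF _ uu(1)] ge oe by (metis antisym)
      show ?thesis
      proof (cases "u + D \<noteq> 0 \<and> ord (u+D) \<le> ord D")
        case True
        then show ?thesis unfolding p using len Dnz Dnz' reg1 reg2 qq nr off nc sat_DZ[of xs] uu tr
          by (auto simp: mem_Mi mem_T C1_def C2_def mem_pcell fnm_def fK_def u_def[symmetric] D_def[symmetric] s)
      next
        case False
        then show ?thesis unfolding p using len Dnz Dnz' reg1 reg2 nc
          by (auto simp: mem_Mi mem_T C1_def C2_def mem_pcell fnm_def fK_def u_def[symmetric] D_def[symmetric] s)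
      qed
    qed
  qed
qed

lemma mid_gt_piece: assumes "m < i" "i < 2*m"
  shows "Mi st i = pcell F n m r k fnm (FAnd fK (FAnd (FNot DZ) BD2)) (FAnd fD1 (OFF2 (i-m)))
           (L1 @ [q (i-1)]) (U1 @ [q (i+1)]) c1"
proof (rule set_eqI)
  fix p :: "'a set list \<times> 'a list \<times> 'a"
  obtain ls xs t where p: "p = (ls, xs, t)" by (cases p) auto
  show "p \<in> Mi st i \<longleftrightarrow> p \<in> pcell F n m r k fnm (FAnd fK (FAnd (FNot DZ) BD2)) (FAnd fD1 (OFF2 (i-m)))
           (L1 @ [q (i-1)]) (U1 @ [q (i+1)]) c1"
  proof (cases "length xs = k \<and> length ls = r \<and> peval c1 xs - peval c2 xs \<noteq> 0")
    case False
    then show ?thesis unfolding p using sat_DZ[of xs]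
      by (auto simp: mem_Mi mem_T C1_def C2_def mem_pcell fnm_def fK_def)
  next
    case True
    define u where "u = t - peval c1 xs"
    define D where "D = peval c1 xs - peval c2 xs"
    have s: "t - peval c2 xs = u + D" by (simp add: u_def D_def)
    have Dnz': "peval c1 xs \<noteq> peval c2 xs" using True by simp
    have len: "length xs = k" "length ls = r" and Dnz: "D \<noteq> 0" using True by (auto simp: D_def)
    have qbi: "(vlt F (peval (q (i-1)) xs) u \<and> vlt F u (peval (q (i+1)) xs)) \<longleftrightarrow> u \<noteq> 0 \<and> ord u = ord D + nsm i one - nsm m one"
      by (rule qb[OF len(1) D_def Dnz]) (use assms in simp)
    show ?thesis
    proof (cases "u \<noteq> 0 \<and> ord u = ord D + nsm i one - nsm m one")
      case False
      then show ?thesis unfolding p using len Dnz Dnz' qbi sat_DZ[of xs]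
        by (auto simp: mem_Mi mem_T C1_def C2_def mem_pcell fnm_def fK_def u_def[symmetric] D_def[symmetric])
    next
      case True
      then have uu: "u \<noteq> 0" "ord u = ord D + nsm i one - nsm m one" by auto
      have qq: "vlt F (peval (q (i-1)) xs) u" "vlt F u (peval (q (i+1)) xs)" using qbi uu by auto
      have nr: "\<not> vlt F u (peval (q 1) xs)" "\<not> vlt F (peval (q (2*m-1)) xs) u"
        using qb2[OF len(1) D_def Dnz _ _ uu] assms by auto
      from mid_gt[OF assms(1) Dnz uu] have c: "u + D \<noteq> 0" "ord (u+D) = ord D" "ord D < ord u"
        "rho F n m (u+D) = ladd F n m ((gamma F n D + (i-m)) div n) (rho F n m D) (rho F n m u)" by auto
      have tr: "\<And>a. vlt F a (u+D) = vlt F a D" "\<And>a. vlt F (u+D) a = vlt F D a"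
        using vlt_transfer[OF c(1) Dnz c(2)] by auto
      have reg: "vdiv F (u+D) u" "vlt F (u+D) u" using c uu by (auto simp: vdiv_def vlt_def)
      have off: "sat F (envL n m (ls @ [rho F n m u])) (envK xs) (OFF2 (i-m)) \<longleftrightarrow>
          sat F (envL n m (ls @ [rho F n m (u+D)])) (envK xs) fD2"
        using sat_OFF2[OF len(2,1) Dnz[unfolded D_def], of u "i-m"] c(4) Dnz by (simp add: D_def)
      show ?thesis unfolding p using len Dnz Dnz' reg qq nr off sat_DZ[of xs] uu sat_BD2[OF len(1)]
        by (auto simp: mem_Mi mem_T C1_def C2_def mem_pcell fnm_def fK_def u_def[symmetric] D_def[symmetric] s tr)
    qed
  qed
qed

end


context two begin

lemma fwf_fnm: "fwf (Ppi F) fnm" and fwf_fK: "fwf (Ppi F) fK"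
  using wf1 wf2 by (auto simp: pwf_def fnm_def fK_def)
lemma fwf_DZ: "fwf (Ppi F) DZ" using kwf_dk by (simp add: DZ_def)
lemma fwf_BD2: "fwf (Ppi F) BD2" using wf2 kwf_dk by (auto simp: BD2_def pwf_def kwf_kp')
lemma fwf_D12: "fwf (Ppi F) (FAnd fD1 fD2)" using wf1 wf2 by (auto simp: pwf_def)
lemma fwf_fD1: "fwf (Ppi F) fD1" using wf1 by (auto simp: pwf_def)
lemma fwf_SUBrd: "fwf (Ppi F) (SUBf rd)" by (rule fwf_SUBf[OF lsort_rd])
lemma fwf_OFF1: "fwf (Ppi F) (OFF1 j)"
  unfolding OFF1_def using lsort_lr lsort_lN lsort_rd fwf_SUBf by auto
lemma fwf_OFF2: "fwf (Ppi F) (OFF2 j)"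
  unfolding OFF2_def using lsort_lr lsort_lN lsort_rd fwf_SUBf by auto
lemma fwf_NC: "fwf (Ppi F) NC"
  unfolding NC_def using lsort_lr lsort_rd n1 m1 by auto

lemma pwf_piece: assumes "fwf (Ppi F) fx" "fwf (Ppi F) fd"
  "set lows \<subseteq> set L1 \<union> set L2 \<union> range q" "set ups \<subseteq> set U1 \<union> set U2 \<union> range q"
  shows "pwf F k fnm (FAnd fK fx) fd lows ups c1"
proof -
  have "\<forall>a\<in>set L1 \<union> set L2 \<union> range q. linpoly F k a" "\<forall>a\<in>set U1 \<union> set U2 \<union> range q. linpoly F k a"
    using wf1 wf2 lpq by (auto simp: pwf_def)
  then show ?thesis using assms fwf_fnm fwf_fK lp(1) by (auto simp: pwf_def)
qed

lemma cover: assumes "length xs = k" "D = peval c1 xs - peval c2 xs" "D \<noteq> 0"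
  "\<not> vlt F u (peval (q 1) xs)" "\<not> vlt F (peval (q (2*m-1)) xs) u"
  shows "u \<noteq> 0 \<and> (\<exists>i. 1 \<le> i \<and> i < 2*m \<and> ord u = ord D + nsm i one - nsm m one)"
proof -
  have a: "peval (q 1) xs = inverse pi ^ m * pi ^ 1 * D" using peval_q peval_dd assms by simp
  have b: "peval (q (2*m-1)) xs = inverse pi ^ m * pi ^ (2*m-1) * D" using peval_q peval_dd assms by simp
  have h1: "\<not> (u \<noteq> 0 \<and> ord u < ord D + nsm 1 one - nsm m one)" using assms(4) unfolding a vlt_q_up using assms(3) by simp
  have h2: "u \<noteq> 0 \<and> \<not> ord D + nsm (2*m-1) one - nsm m one < ord u" using assms(5) unfolding b vlt_q_lo using assms(3) by auto
  then have u: "u \<noteq> 0" by simp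
  have lo: "ord D + nsm 1 one - nsm m one \<le> ord u" using h1 u by simp
  have "2*m-1 = 1 + (2*m-2)" using m1 by simp
  then have "nsm (2*m-1) one = nsm 1 one + nsm (2*m-2) one" using nsm_add[of 1 "2*m-2" one] by metis
  moreover have "ord u \<le> ord D + nsm (2*m-1) one - nsm m one" using h2 by (simp add: not_less)
  ultimately have up: "ord u \<le> (ord D + nsm 1 one - nsm m one) + nsm (2*m-2) one" by (simp add: algebra_simps)
  from Z2[OF lo up] obtain j where j: "j \<le> 2*m-2" "ord u = ord D + nsm 1 one - nsm m one + nsm j one" by blast
  have "ord u = ord D + nsm (Suc j) one - nsm m one" using j(2) nsm_add[of 1 j one] by (simp add: algebra_simps)
  moreover have "1 \<le> Suc j" "Suc j < 2*m" using j(1) m1 by auto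
  ultimately show ?thesis using u by blast
qed

lemma decomp_Mi: assumes "1 \<le> i" "i < 2*m" shows "decomp F n m r k (Mi st i)"
proof -
  have sub1: "set (L1 @ L2 @ [q (i-1)]) \<subseteq> set L1 \<union> set L2 \<union> range q" "set (U1 @ U2 @ [q (i+1)]) \<subseteq> set U1 \<union> set U2 \<union> range q"
    "set (L1 @ [q (i-1)]) \<subseteq> set L1 \<union> set L2 \<union> range q" "set (U1 @ [q (i+1)]) \<subseteq> set U1 \<union> set U2 \<union> range q" by auto
  consider "i < m" | "i = m" | "m < i" by linarith
  then show ?thesis
  proof cases
    case 1
    then show ?thesis unfolding mid_lt_piece[OF assms(1) 1]
      using pcell_decomp[OF pwf_piece[OF _ _ sub1(1,2)]] fwf_DZ fwf_fD1 fwf_OFF1 decomp_empty by auto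
  next
    case 2
    then show ?thesis unfolding mid_eq_piece[OF 2]
      using pcell_decomp[OF pwf_piece[OF _ _ sub1(1,2)]] fwf_DZ fwf_fD1 fwf_OFF1 fwf_NC decomp_empty by auto
  next
    case 3
    then show ?thesis unfolding mid_gt_piece[OF 3 assms(2)]
      using pcell_decomp[OF pwf_piece[OF _ _ sub1(3,4)]] fwf_DZ fwf_BD2 fwf_fD1 fwf_OFF2 by auto
  qed
qed

lemma decomp_T: "decomp F n m r k (T st)"
proof -
  define P1 where "P1 = (\<lambda>p :: 'a set list \<times> 'a list \<times> 'a. case p of (ls, xs, t) \<Rightarrow> peval c1 xs - peval c2 xs = 0)"
  define P2 where "P2 = (\<lambda>p :: 'a set list \<times> 'a list \<times> 'a. case p of (ls, xs, t) \<Rightarrow> vlt F (t - peval c1 xs) (peval (q 1) xs))"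
  define P3 where "P3 = (\<lambda>p :: 'a set list \<times> 'a list \<times> 'a. case p of (ls, xs, t) \<Rightarrow> vlt F (peval (q (2*m-1)) xs) (t - peval c1 xs))"
  have d1: "decomp F n m r k {p \<in> T st. P1 p}"
  proof -
    have "{p \<in> T st. P1 p} = (if st then {} else pcell F n m r k fnm (FAnd fK DZ) (FAnd fD1 fD2) (L1 @ L2) (U1 @ U2) c1)"
      unfolding P1_def by (rule piece_i)
    moreover have "decomp F n m r k (pcell F n m r k fnm (FAnd fK DZ) (FAnd fD1 fD2) (L1 @ L2) (U1 @ U2) c1)"
      by (rule pcell_decomp[OF pwf_piece[OF fwf_DZ fwf_D12]]) auto
    ultimately show ?thesis using decomp_empty by auto
  qed
  have d2: "decomp F n m r k {p \<in> {p \<in> T st. \<not> P1 p}. P2 p}"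
  proof -
    have "{p \<in> {p \<in> T st. \<not> P1 p}. P2 p} = {p \<in> T st. case p of (ls, xs, t) \<Rightarrow> \<not> peval c1 xs - peval c2 xs = 0 \<and> vlt F (t - peval c1 xs) (peval (q 1) xs)}"
      unfolding P1_def P2_def by auto
    also have "\<dots> = (if st then {} else pcell F n m r k fnm (FAnd fK (FNot DZ)) (FAnd fD1 fD2) (L1 @ L2) (U1 @ U2 @ [q 1]) c1)"
      by (rule piece_ii)
    finally have e: "{p \<in> {p \<in> T st. \<not> P1 p}. P2 p} = \<dots>" .
    have "decomp F n m r k (pcell F n m r k fnm (FAnd fK (FNot DZ)) (FAnd fD1 fD2) (L1 @ L2) (U1 @ U2 @ [q 1]) c1)"
      by (rule pcell_decomp[OF pwf_piece]) (use fwf_DZ fwf_D12 in auto)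
    then show ?thesis unfolding e using decomp_empty by auto
  qed
  have d3: "decomp F n m r k {p \<in> {p \<in> {p \<in> T st. \<not> P1 p}. \<not> P2 p}. P3 p}"
  proof -
    have "{p \<in> {p \<in> {p \<in> T st. \<not> P1 p}. \<not> P2 p}. P3 p} = {p \<in> T st. case p of (ls, xs, t) \<Rightarrow> \<not> peval c1 xs - peval c2 xs = 0 \<and> \<not> vlt F (t - peval c1 xs) (peval (q 1) xs)
     \<and> vlt F (peval (q (2*m-1)) xs) (t - peval c1 xs)}"
      unfolding P1_def P2_def P3_def by auto
    also have "\<dots> = pcell F n m r k fnm (FAnd fK (FAnd (FNot DZ) BD2)) (FAnd fD1 (SUBf rd)) (L1 @ [q (2*m-1)]) U1 c1"
      by (rule piece_vi)
    finally have e: "{p \<in> {p \<in> {p \<in> T st. \<not> P1 p}. \<not> P2 p}. P3 p} = \<dots>" .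
    have "decomp F n m r k (pcell F n m r k fnm (FAnd fK (FAnd (FNot DZ) BD2)) (FAnd fD1 (SUBf rd)) (L1 @ [q (2*m-1)]) U1 c1)"
      by (rule pcell_decomp[OF pwf_piece]) (use fwf_DZ fwf_BD2 fwf_fD1 fwf_SUBrd in auto)
    then show ?thesis unfolding e .
  qed
  have d4: "decomp F n m r k {p \<in> {p \<in> {p \<in> T st. \<not> P1 p}. \<not> P2 p}. \<not> P3 p}"
  proof -
    have e: "{p \<in> {p \<in> {p \<in> T st. \<not> P1 p}. \<not> P2 p}. \<not> P3 p} = (\<Union>i\<in>{1..<2*m}. Mi st i)"
    proof (rule set_eqI)
      fix p :: "'a set list \<times> 'a list \<times> 'a"
      obtain ls xs t where p: "p = (ls, xs, t)" by (cases p) auto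
      show "p \<in> {p \<in> {p \<in> {p \<in> T st. \<not> P1 p}. \<not> P2 p}. \<not> P3 p} \<longleftrightarrow> p \<in> (\<Union>i\<in>{1..<2*m}. Mi st i)"
      proof
        assume a: "p \<in> {p \<in> {p \<in> {p \<in> T st. \<not> P1 p}. \<not> P2 p}. \<not> P3 p}"
        then have len: "length xs = k" by (auto simp: p mem_T C1_def pcell_def)
        from a have h: "peval c1 xs - peval c2 xs \<noteq> 0" "\<not> vlt F (t - peval c1 xs) (peval (q 1) xs)"
          "\<not> vlt F (peval (q (2*m-1)) xs) (t - peval c1 xs)" "(ls, xs, t) \<in> T st" by (auto simp: p P1_def P2_def P3_def)
        from cover[OF len refl h(1-3)] obtain i where "1 \<le> i" "i < 2*m"
          "t - peval c1 xs \<noteq> 0" "ord (t - peval c1 xs) = ord (peval c1 xs - peval c2 xs) + nsm i one - nsm m one" by blast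
        then show "p \<in> (\<Union>i\<in>{1..<2*m}. Mi st i)" using h unfolding p by (auto simp: mem_Mi)
      next
        assume "p \<in> (\<Union>i\<in>{1..<2*m}. Mi st i)"
        then show "p \<in> {p \<in> {p \<in> {p \<in> T st. \<not> P1 p}. \<not> P2 p}. \<not> P3 p}"
          unfolding p by (auto simp: mem_Mi P1_def P2_def P3_def)
      qed
    qed
    have dis: "\<forall>i\<in>{1..<2*m}. \<forall>j\<in>{1..<2*m}. i \<noteq> j \<longrightarrow> Mi st i \<inter> Mi st j = {}"
    proof (intro ballI impI)
      fix i j :: nat assume "i \<noteq> j"
      show "Mi st i \<inter> Mi st j = {}"
      proof (rule ccontr)
        assume "Mi st i \<inter> Mi st j \<noteq> {}"
        then obtain ls xs t where "(ls, xs, t) \<in> Mi st i" "(ls, xs, t) \<in> Mi st j" by auto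
        then have "nsm i one = nsm j one" by (auto simp: mem_Mi)
        then show False using nsm_inj_n[OF _ one_pos] \<open>i \<noteq> j\<close> by blast
      qed
    qed
    show ?thesis unfolding e by (rule decomp_UN) (use dis decomp_Mi in auto)
  qed
  show ?thesis
    by (rule decomp_split[where P = P1, OF d1 decomp_split[where P = P2, OF d2 decomp_split[where P = P3, OF d3 d4]]])
qed

end

lemma vlt_vdiv': "vlt F x y \<longleftrightarrow> \<not> vdiv F y x" by (auto simp: vlt_def vdiv_def)

lemma mainlemma:
  assumes "is_zfield F" "1 \<le> n" "1 \<le> m" "is_cell F n m r k C1" "is_cell F n m r k C2"
  shows "decomp F n m r k (C1 \<inter> C2)"
proof -
  obtain fnm1 fK1 fD1 L1 U1 c1 where w1: "pwf F k fnm1 fK1 fD1 L1 U1 c1" and e1: "C1 = pcell F n m r k fnm1 fK1 fD1 L1 U1 c1"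
    using cell_pcell[OF assms(4)] by blast
  obtain fnm2 fK2 fD2 L2 U2 c2 where w2: "pwf F k fnm2 fK2 fD2 L2 U2 c2" and e2: "C2 = pcell F n m r k fnm2 fK2 fD2 L2 U2 c2"
    using cell_pcell[OF assms(5)] by blast
  interpret A: two F n m r k fnm1 fK1 fD1 L1 U1 c1 fnm2 fK2 fD2 L2 U2 c2
    by unfold_locales (use assms w1 w2 in auto)
  interpret B: two F n m r k fnm2 fK2 fD2 L2 U2 c2 fnm1 fK1 fD1 L1 U1 c1
    by unfold_locales (use assms w1 w2 in auto)
  have "C1 \<inter> C2 = A.T False \<union> B.T True"
    unfolding A.T_def B.T_def A.C1_def A.C2_def B.C1_def B.C2_def e1 e2 by (auto simp: vlt_vdiv')
  moreover have "A.T False \<inter> B.T True = {}"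
    unfolding A.T_def B.T_def by (auto simp: vlt_vdiv')
  ultimately show ?thesis using decomp_Un[OF A.decomp_T B.decomp_T] by simp
qed

theorem mainTheorem2:
  fixes F :: "('a::field, 'g::linordered_ab_group_add) zfield"
    and n m r k :: nat
    and C1 C2 :: "('a set list \<times> 'a list \<times> 'a) set"
  assumes "is_zfield F"
    and "1 \<le> n" and "1 \<le> m"
    and "is_cell F n m r k C1" and "is_cell F n m r k C2"
  shows "\<exists>Cs. finite Cs \<and> (\<forall>C\<in>Cs. is_cell F n m r k C) \<and> pairwise disjnt Cs \<and> \<Union>Cs = C1 \<inter> C2"
  using mainlemma[OF assms] unfolding decomp_def .


end
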